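(* Let $n\ge 4$, $d\ge 1$, $\tau>0$, $\sigma>0$. Let $\mu^\star_1,\mu^\star_2\stackrel{\mathrm{i.i.d.}}{\sim}\mathcal N(0,\tau^2 I_d)$ and $\xi_1,\dots,\xi_n\stackrel{\mathrm{i.i.d.}}{\sim}\mathcal N(0,\sigma^2 I_d)$, independent, let $z^\star_1,\dots,z^\star_n\in\{1,2\}$ be fixed labels with both classes $S^\star_\ell=\{i:z^\star_i=\ell\}$ nonempty, and $x_i=\mu^\star_{z^\star_i}+\xi_i$. Then the probability that there exists a partition of $[n]$ into two nonempty sets which is incorrect (i.e. does not coincide with $\{S^\star_1,S^\star_2\}$ up to swapping labels) and is a fixed point of Hartigan's algorithm is at most $2^n\rho_h^{d/4}$, where $$\rho_h=1-\left(\frac{4\tau^2(R^\star)^2n^{-1}}{3\tau^2+\sigma^2}\right)^2,\qquad R^\star=\min(|S^\star_1|,|S^\star_2|)/n.$$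
   Context: For a partition $\{C_1,C_2\}$ with centroids $\widehat\mu_k=|C_k|^{-1}\sum_{m\in C_k}x_m$, the Hartigan weighted distance is $\Delta_H^2(x_i,C_k)=\frac{|C_k|}{|C_k|-1}\|x_i-\widehat\mu_k\|^2$ if $i\in C_k$, and $\frac{|C_k|}{|C_k|+1}\|x_i-\widehat\mu_k\|^2$ if $i\notin C_k$. A partition is a fixed point of Hartigan's algorithm if no single-sample move is strictly improving: for every $i$ in a cluster $C_k$ with $|C_k|>1$ and the other cluster $C_{k'}$, $\Delta_H^2(x_i,C_k)\le\Delta_H^2(x_i,C_{k'})$. Randomness is over the centers and noise. *)

theory Defs
  imports "HOL-Probability.Probability"
begin

definition centroid :: "(nat \<Rightarrow> 'v::real_vector) \<Rightarrow> nat set \<Rightarrow> 'v" where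
  "centroid x C = (1 / real (card C)) *\<^sub>R (\<Sum>m\<in>C. x m)"

definition hartigan_dist :: "(nat \<Rightarrow> 'v::real_normed_vector) \<Rightarrow> nat set \<Rightarrow> nat \<Rightarrow> real" where
  "hartigan_dist x C i =
     (if i \<in> C then real (card C) / (real (card C) - 1) * (norm (x i - centroid x C))\<^sup>2
      else real (card C) / (real (card C) + 1) * (norm (x i - centroid x C))\<^sup>2)"

definition hartigan_fixed_point ::
  "(nat \<Rightarrow> 'v::real_normed_vector) \<Rightarrow> nat set \<Rightarrow> nat set \<Rightarrow> bool" where
  "hartigan_fixed_point x C1 C2 \<longleftrightarrow>
     (\<forall>i\<in>C1. card C1 > 1 \<longrightarrow> hartigan_dist x C1 i \<le> hartigan_dist x C2 i) \<and>
     (\<forall>i\<in>C2. card C2 > 1 \<longrightarrow> hartigan_dist x C2 i \<le> hartigan_dist x C1 i)"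

definition iso_gauss_density :: "real \<Rightarrow> real ^ 'd \<Rightarrow> ennreal" where
  "iso_gauss_density s x = ennreal (\<Prod>j\<in>UNIV. normal_density 0 s (x $ j))"

end

theory Submission
  imports Defs
begin

lemma Basis_vec_range: "(Basis :: (real^'d) set) = range (\<lambda>j. axis j 1)"
  by (auto simp: Basis_vec_def)

lemma inj_axis1: "inj (\<lambda>j::'d::finite. axis j (1::real))"
  by (auto simp: inj_def axis_eq_axis)

lemma nn_integral_lborel_vec_prod:
  fixes f :: "'d::finite \<Rightarrow> real \<Rightarrow> ennreal"
  assumes [measurable]: "\<And>j. f j \<in> borel_measurable borel"
  shows "(\<integral>\<^sup>+x. (\<Prod>j\<in>UNIV. f j (x $ j)) \<partial>(lborel :: (real^'d) measure)) = (\<Prod>j\<in>UNIV. \<integral>\<^sup>+x. f j x \<partial>lborel)"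
proof -
  define F where "F b = f (SOME j. axis j 1 = b)" for b :: "real^'d"
  have FF: "F (axis j 1) = f j" for j
    unfolding F_def by (rule arg_cong[where f=f]) (use inj_axis1 in \<open>auto simp: inj_def intro!: some_equality\<close>)
  have "(\<integral>\<^sup>+x. (\<Prod>b\<in>Basis. F b (x \<bullet> b)) \<partial>(lborel :: (real^'d) measure)) = (\<Prod>b\<in>Basis. (\<integral>\<^sup>+x. F b x \<partial>lborel))"
    by (rule nn_integral_lborel_prod) (auto simp: F_def)
  also have "(\<lambda>x::real^'d. \<Prod>b\<in>Basis. F b (x \<bullet> b)) = (\<lambda>x. \<Prod>j\<in>UNIV. f j (x $ j))"
    by (auto simp: Basis_vec_range prod.reindex[OF inj_axis1] FF cart_eq_inner_axis)
  also have "(\<Prod>b\<in>Basis. (\<integral>\<^sup>+x. F b x \<partial>lborel)) = (\<Prod>j\<in>UNIV. \<integral>\<^sup>+x. f j x \<partial>lborel)"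
    by (auto simp: Basis_vec_range prod.reindex[OF inj_axis1] FF)
  finally show ?thesis .
qed

lemma iso_gauss_density_meas[measurable]: "iso_gauss_density s \<in> borel_measurable borel"
  unfolding iso_gauss_density_def by measurable

locale hset = prob_space M for M :: "'a measure" +
  fixes Y :: "'k \<Rightarrow> 'a \<Rightarrow> real^'d" and K :: "'k set" and sd :: "'k \<Rightarrow> real"
  assumes Kfin: "finite K" and sdpos: "\<And>k. k \<in> K \<Longrightarrow> sd k > 0"
    and distY: "\<And>k. k \<in> K \<Longrightarrow> distributed M lborel (Y k) (iso_gauss_density (sd k))"
    and indY: "indep_vars (\<lambda>_. borel) Y K"
begin

lemma Y_meas: "k \<in> K \<Longrightarrow> Y k \<in> borel_measurable M"
  using distY[of k] by (auto simp: distributed_def)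

lemma coord_emeasure:
  assumes k: "k \<in> K" and A[measurable]: "\<And>j. A j \<in> sets borel"
  shows "emeasure M {\<omega>\<in>space M. \<forall>j. Y k \<omega> $ j \<in> A j} =
     (\<Prod>j\<in>UNIV. emeasure (density lborel (\<lambda>x. ennreal (normal_density 0 (sd k) x))) (A j))"
proof -
  define B where "B = {v::real^'d. \<forall>j. v $ j \<in> A j}"
  have Bm[measurable]: "B \<in> sets borel" unfolding B_def by measurable
  have "{\<omega>\<in>space M. \<forall>j. Y k \<omega> $ j \<in> A j} = Y k -` B \<inter> space M" by (auto simp: B_def)
  also have "emeasure M \<dots> = emeasure (distr M lborel (Y k)) B"
    using Y_meas[OF k] by (subst emeasure_distr) auto
  also have "\<dots> = emeasure (density lborel (iso_gauss_density (sd k))) B"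
    using distY[OF k] by (simp add: distributed_def)
  also have "\<dots> = (\<integral>\<^sup>+v. iso_gauss_density (sd k) v * indicator B v \<partial>lborel)"
    by (rule emeasure_density) (auto simp: iso_gauss_density_def)
  also have "\<dots> = (\<integral>\<^sup>+v. (\<Prod>j\<in>UNIV. ennreal (normal_density 0 (sd k) (v $ j)) * indicator (A j) (v $ j)) \<partial>lborel)"
    by (intro nn_integral_cong)
       (simp add: iso_gauss_density_def prod_ennreal[symmetric] prod.distrib B_def indicator_def)
  also have "\<dots> = (\<Prod>j\<in>UNIV. \<integral>\<^sup>+x. ennreal (normal_density 0 (sd k) x) * indicator (A j) x \<partial>lborel)"
    by (rule nn_integral_lborel_vec_prod) measurable
  also have "\<dots> = (\<Prod>j\<in>UNIV. emeasure (density lborel (\<lambda>x. ennreal (normal_density 0 (sd k) x))) (A j))"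
    by (intro prod.cong refl emeasure_density[symmetric]) auto
  finally show ?thesis .
qed

end

lemma enn2real_prod: "enn2real (prod f A) = (\<Prod>i\<in>A. enn2real (f i))"
  by (induction A rule: infinite_finite_induct) (auto simp: enn2real_mult)

lemma vec_nth_meas[measurable]: "(\<lambda>v::real^'d. v $ j) \<in> borel_measurable borel"
  by (intro borel_measurable_continuous_onI continuous_intros)

context hset begin

abbreviation PN :: "'k \<Rightarrow> real set \<Rightarrow> real" where
  "PN k A \<equiv> measure (density lborel (\<lambda>x. ennreal (normal_density 0 (sd k) x))) A"

lemma coord_prob:
  assumes k: "k \<in> K" and A[measurable]: "\<And>j. A j \<in> sets borel"
  shows "prob {\<omega>\<in>space M. \<forall>j. Y k \<omega> $ j \<in> A j} = (\<Prod>j\<in>UNIV. PN k (A j))"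
  using coord_emeasure[OF assms] by (simp add: measure_def enn2real_prod)

definition Z :: "'k \<times> 'd \<Rightarrow> 'a \<Rightarrow> real" where
  "Z i \<omega> = Y (fst i) \<omega> $ snd i"

lemma Z_meas[measurable]: "fst i \<in> K \<Longrightarrow> Z i \<in> borel_measurable M"
proof -
  assume "fst i \<in> K"
  then have [measurable]: "Y (fst i) \<in> borel_measurable M" by (rule Y_meas)
  show ?thesis unfolding Z_def by measurable
qed

lemma Z_prob:
  assumes k: "k \<in> K" and A[measurable]: "A \<in> sets borel"
  shows "prob (Z (k, j) -` A \<inter> space M) = PN k A"
proof -
  have "Z (k, j) -` A \<inter> space M = {\<omega>\<in>space M. \<forall>j'. Y k \<omega> $ j' \<in> (if j' = j then A else UNIV)}"
    by (auto simp: Z_def split: if_splits)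
  also have "prob \<dots> = (\<Prod>j'\<in>UNIV. PN k (if j' = j then A else UNIV))"
    by (rule coord_prob[OF k]) auto
  also have "\<dots> = PN k A"
  proof -
    interpret N: prob_space "density lborel (\<lambda>x. ennreal (normal_density 0 (sd k) x))"
      by (rule prob_space_normal_density) (rule sdpos[OF k])
    have "(\<Prod>j'\<in>UNIV. PN k (if j' = j then A else UNIV)) = (\<Prod>j'\<in>UNIV. if j' = j then PN k A else 1)"
    proof -
      have "N.prob UNIV = 1" using N.prob_space by simp
      then show ?thesis by (intro prod.cong) auto
    qed
    then show ?thesis by (simp add: prod.delta)
  qed
  finally show ?thesis .
qed

lemma Z_indep:
  assumes Kne: "K \<noteq> {}"
  shows "indep_vars (\<lambda>_. borel) Z (K \<times> UNIV)"
proof (subst indep_vars_finite[where E="\<lambda>_. sets borel"])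
  show "K \<times> UNIV \<noteq> {}" "finite (K \<times> (UNIV :: 'd set))" using Kne Kfin by auto
  show "random_variable borel (Z i)" if "i \<in> K \<times> UNIV" for i using that by auto
  show "Int_stable (sets borel)" by (auto simp: Int_stable_def)
  show "\<forall>A\<in>K \<times> UNIV \<rightarrow> sets borel. prob (\<Inter>i\<in>K \<times> UNIV. Z i -` A i \<inter> space M) = (\<Prod>i\<in>K \<times> UNIV. prob (Z i -` A i \<inter> space M))"
  proof
    fix A :: "'k \<times> 'd \<Rightarrow> real set" assume A: "A \<in> K \<times> (UNIV::'d set) \<rightarrow> sets borel"
    define B where "B k = {v::real^'d. \<forall>j. v $ j \<in> A (k, j)}" for k
    have Bm: "B k \<in> sets borel" if "k \<in> K" for k
    proof -
      have [measurable]: "A (k, j) \<in> sets borel" for j using A that by auto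
      show ?thesis unfolding B_def by measurable
    qed
    have "(\<Inter>i\<in>K \<times> UNIV. Z i -` A i \<inter> space M) = (\<Inter>k\<in>K. Y k -` B k \<inter> space M)"
      using Kne by (auto simp: Z_def B_def)
    then have "prob (\<Inter>i\<in>K \<times> UNIV. Z i -` A i \<inter> space M) = (\<Prod>k\<in>K. prob (Y k -` B k \<inter> space M))"
      using indep_varsD_finite[OF indY Kne Kfin, of B] Bm by simp
    also have "\<dots> = (\<Prod>k\<in>K. \<Prod>j\<in>UNIV. PN k (A (k, j)))"
    proof (intro prod.cong refl)
      fix k assume k: "k \<in> K"
      have "Y k -` B k \<inter> space M = {\<omega>\<in>space M. \<forall>j. Y k \<omega> $ j \<in> A (k, j)}" by (auto simp: B_def)
      then show "prob (Y k -` B k \<inter> space M) = (\<Prod>j\<in>UNIV. PN k (A (k, j)))"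
        using coord_prob[OF k, of "\<lambda>j. A (k, j)"] A k by auto
    qed
    also have "\<dots> = (\<Prod>i\<in>K \<times> UNIV. PN (fst i) (A i))"
      by (simp add: prod.cartesian_product split_beta)
    also have "\<dots> = (\<Prod>i\<in>K \<times> UNIV. prob (Z i -` A i \<inter> space M))"
    proof (intro prod.cong refl)
      fix i assume i: "i \<in> K \<times> (UNIV::'d set)"
      obtain k j where kj: "i = (k, j)" by (cases i)
      show "PN (fst i) (A i) = prob (Z i -` A i \<inter> space M)"
      proof -
        have "k \<in> K" "A (k, j) \<in> sets borel" using A i unfolding kj by auto
        then show ?thesis using Z_prob[of k "A (k, j)" j] unfolding kj by simp
      qed
    qed
    finally show "prob (\<Inter>i\<in>K \<times> UNIV. Z i -` A i \<inter> space M) = (\<Prod>i\<in>K \<times> UNIV. prob (Z i -` A i \<inter> space M))" .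
  qed
next
  have "sigma_sets UNIV (sets borel) = sets (borel :: real measure)"
    using sets.sigma_sets_eq[of "borel :: real measure"] by simp
  then show "\<And>i. i \<in> K \<times> UNIV \<Longrightarrow> sets borel = sigma_sets (space borel) (sets (borel :: real measure))"
    by simp
qed (auto intro!: sets.sets_into_space) 

end

lemma nn_integral_normal_density: "s > 0 \<Longrightarrow> (\<integral>\<^sup>+x. ennreal (normal_density m s x) \<partial>lborel) = 1"
  by (subst nn_integral_eq_integral) (auto simp: normal_density_nonneg)

lemma exp_sq_normal_pointwise:
  fixes s \<sigma> x :: real
  assumes "\<sigma> > 0" "1 - 2 * s * \<sigma>\<^sup>2 > 0"
  shows "exp (s * x\<^sup>2) * normal_density 0 \<sigma> x =
    (1 / sqrt (1 - 2 * s * \<sigma>\<^sup>2)) * normal_density 0 (\<sigma> / sqrt (1 - 2 * s * \<sigma>\<^sup>2)) x"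
proof -
  define q where "q = 1 - 2 * s * \<sigma>\<^sup>2"
  have q: "q > 0" using assms by (simp add: q_def)
  have e: "s * x\<^sup>2 + - x\<^sup>2 / (2 * \<sigma>\<^sup>2) = - x\<^sup>2 / (2 * (\<sigma> / sqrt q)\<^sup>2)"
    using q assms(1) by (simp add: power_divide q_def field_simps)
  have r: "1 / sqrt (2 * pi * \<sigma>\<^sup>2) = (1 / sqrt q) * (1 / sqrt (2 * pi * (\<sigma> / sqrt q)\<^sup>2))"
    using q assms(1) by (simp add: power_divide real_sqrt_divide real_sqrt_mult field_simps)
  have r2: "sqrt q * sqrt (2 * pi * (\<sigma> / sqrt q)\<^sup>2) = sqrt (2 * pi * \<sigma>\<^sup>2)"
    using q by (simp add: real_sqrt_mult[symmetric] power_divide)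
  have "exp (s * x\<^sup>2) * normal_density 0 \<sigma> x = exp (s * x\<^sup>2 + - x\<^sup>2 / (2 * \<sigma>\<^sup>2)) / sqrt (2 * pi * \<sigma>\<^sup>2)"
    unfolding normal_density_def by (simp add: exp_add[symmetric] exp_diff)
  also have "\<dots> = exp (- x\<^sup>2 / (2 * (\<sigma> / sqrt q)\<^sup>2)) / (sqrt q * sqrt (2 * pi * (\<sigma> / sqrt q)\<^sup>2))"
    unfolding e r2 ..
  also have "\<dots> = (1 / sqrt q) * normal_density 0 (\<sigma> / sqrt q) x"
    unfolding normal_density_def by simp
  finally show ?thesis unfolding q_def .
qed

lemma exp_sq_normal_integral:
  fixes s \<sigma> :: real
  assumes "\<sigma> > 0" "1 - 2 * s * \<sigma>\<^sup>2 > 0"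
  shows "(\<integral>\<^sup>+x. ennreal (exp (s * x\<^sup>2)) * ennreal (normal_density 0 \<sigma> x) \<partial>lborel) =
    ennreal (1 / sqrt (1 - 2 * s * \<sigma>\<^sup>2))"
proof -
  have "(\<integral>\<^sup>+x. ennreal (exp (s * x\<^sup>2)) * ennreal (normal_density 0 \<sigma> x) \<partial>lborel) =
     (\<integral>\<^sup>+x. ennreal (1 / sqrt (1 - 2 * s * \<sigma>\<^sup>2)) * ennreal (normal_density 0 (\<sigma> / sqrt (1 - 2 * s * \<sigma>\<^sup>2)) x) \<partial>lborel)"
    using assms by (intro nn_integral_cong) (simp add: ennreal_mult'[symmetric] exp_sq_normal_pointwise)
  also have "\<dots> = ennreal (1 / sqrt (1 - 2 * s * \<sigma>\<^sup>2))"
    using assms by (subst nn_integral_cmult) (auto simp: nn_integral_normal_density)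
  finally show ?thesis .
qed

lemma (in prob_space) indep_vars_group:
  fixes Z :: "'i \<Rightarrow> 'a \<Rightarrow> 'b::topological_space" and \<phi> :: "'l \<Rightarrow> ('i \<Rightarrow> 'b) \<Rightarrow> 'c::topological_space"
  assumes ind: "indep_vars (\<lambda>_. borel) Z I" and G: "\<And>l. l \<in> L \<Longrightarrow> G l \<subseteq> I"
    and disj: "disjoint_family_on G L"
    and phi: "\<And>l. l \<in> L \<Longrightarrow> \<phi> l \<in> borel_measurable (PiM (G l) (\<lambda>_. borel))"
  shows "indep_vars (\<lambda>_. borel) (\<lambda>l \<omega>. \<phi> l (restrict (\<lambda>i. Z i \<omega>) (G l))) L"
  using indep_vars_compose2[OF indep_vars_restrict[OF ind G disj] phi] by simp

context hset begin

lemma Z_dist: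
  assumes k: "k \<in> K"
  shows "distributed M lborel (Z (k, j)) (normal_density 0 (sd k))"
proof -
  interpret N: prob_space "density lborel (\<lambda>x. ennreal (normal_density 0 (sd k) x))"
    by (rule prob_space_normal_density) (rule sdpos[OF k])
  have "distr M lborel (Z (k, j)) = density lborel (\<lambda>x. ennreal (normal_density 0 (sd k) x))"
  proof (rule measure_eqI)
    fix A assume "A \<in> sets (distr M lborel (Z (k, j)))"
    then have A[measurable]: "A \<in> sets borel" by simp
    have "emeasure (distr M lborel (Z (k, j))) A = emeasure M (Z (k, j) -` A \<inter> space M)"
      using k by (subst emeasure_distr) auto
    also have "\<dots> = ennreal (prob (Z (k, j) -` A \<inter> space M))"
      by (rule emeasure_eq_measure)
    also have "\<dots> = ennreal (PN k A)" using Z_prob[OF k A] by simp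
    also have "\<dots> = emeasure (density lborel (\<lambda>x. ennreal (normal_density 0 (sd k) x))) A"
      by (rule N.emeasure_eq_measure[symmetric])
    finally show "emeasure (distr M lborel (Z (k, j))) A = emeasure (density lborel (\<lambda>x. ennreal (normal_density 0 (sd k) x))) A" .
  qed simp
  then show ?thesis using k by (auto simp: distributed_def)
qed

definition Uc :: "('k \<Rightarrow> real) \<Rightarrow> 'a \<Rightarrow> real^'d" where
  "Uc c \<omega> = (\<Sum>k\<in>K. c k *\<^sub>R Y k \<omega>)"

definition varc :: "('k \<Rightarrow> real) \<Rightarrow> real" where
  "varc c = (\<Sum>k\<in>K. (c k)\<^sup>2 * (sd k)\<^sup>2)"

lemma Uc_coord: "Uc c \<omega> $ j = (\<Sum>k\<in>K. c k * Z (k, j) \<omega>)"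
  by (simp add: Uc_def Z_def)

lemma Uc_coord': "Uc c \<omega> $ j = (\<Sum>k\<in>{k\<in>K. c k \<noteq> 0}. c k * Z (k, j) \<omega>)"
  unfolding Uc_coord using Kfin by (intro sum.mono_neutral_right) auto

lemma varc': "varc c = (\<Sum>k\<in>{k\<in>K. c k \<noteq> 0}. (\<bar>c k\<bar> * sd k)\<^sup>2)"
  unfolding varc_def using Kfin by (subst sum.mono_neutral_right[of K]) (auto simp: power_mult_distrib)

lemma varc_pos: "{k\<in>K. c k \<noteq> 0} \<noteq> {} \<Longrightarrow> varc c > 0"
  unfolding varc' using Kfin sdpos by (intro sum_pos) (auto, metis less_irrefl)

lemma Uc_coord_dist:
  assumes ne: "{k\<in>K. c k \<noteq> 0} \<noteq> {}"
  shows "distributed M lborel (\<lambda>\<omega>. Uc c \<omega> $ j) (normal_density 0 (sqrt (varc c)))"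
proof -
  let ?K = "{k\<in>K. c k \<noteq> 0}"
  have ind0: "indep_vars (\<lambda>_. borel) (\<lambda>k \<omega>. (\<lambda>f. c k * f (k, j)) (restrict (\<lambda>i. Z i \<omega>) {(k, j)})) ?K"
    by (rule indep_vars_group[OF Z_indep]) (use ne in \<open>auto simp: disjoint_family_on_def\<close>)
  have ind: "indep_vars (\<lambda>_. borel) (\<lambda>k \<omega>. c k * Z (k, j) \<omega>) ?K"
    using ind0 by (rule indep_vars_cong[THEN iffD1, rotated 3]) auto
  have d: "distributed M lborel (\<lambda>\<omega>. c k * Z (k, j) \<omega>) (normal_density 0 (\<bar>c k\<bar> * sd k))" if "k \<in> ?K" for k
    using normal_density_affine[OF Z_dist[of k j], of "c k" 0] that sdpos[of k] by simp
  have "distributed M lborel (\<lambda>\<omega>. \<Sum>k\<in>?K. c k * Z (k, j) \<omega>) (normal_density (\<Sum>k\<in>?K. 0) (sqrt (\<Sum>k\<in>?K. (\<bar>c k\<bar> * sd k)\<^sup>2)))"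
    by (rule sum_indep_normal[OF _ ne ind]) (use Kfin sdpos d in auto)
  then show ?thesis by (simp add: Uc_coord'[symmetric] varc'[symmetric])
qed

end

lemma norm_sq_vec: "(norm (x :: real^'d))\<^sup>2 = (\<Sum>j\<in>UNIV. (x $ j)\<^sup>2)"
  unfolding power2_norm_eq_inner by (simp add: inner_vec_def power2_eq_square)

context hset begin

lemma Uc_meas[measurable]: "Uc c \<in> borel_measurable M"
proof -
  have [measurable]: "Y k \<in> borel_measurable M" if "k \<in> K" for k using Y_meas that .
  show ?thesis unfolding Uc_def by measurable
qed

lemma Uc_exp_sq:
  assumes ne: "{k\<in>K. c k \<noteq> 0} \<noteq> {}" and s: "1 - 2 * s * varc c > 0"
  shows "(\<integral>\<^sup>+\<omega>. ennreal (exp (s * (norm (Uc c \<omega>))\<^sup>2)) \<partial>M) =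
    ennreal ((1 / sqrt (1 - 2 * s * varc c)) ^ CARD('d))"
proof -
  have vp: "varc c > 0" by (rule varc_pos[OF ne])
  define W where "W j \<omega> = ennreal (exp (s * (Uc c \<omega> $ j)\<^sup>2))" for j \<omega>
  have "(\<lambda>\<omega>. ennreal (exp (s * (norm (Uc c \<omega>))\<^sup>2))) = (\<lambda>\<omega>. \<Prod>j\<in>UNIV. W j \<omega>)"
    by (auto simp: W_def norm_sq_vec sum_distrib_left exp_sum prod_ennreal)
  moreover have "indep_vars (\<lambda>_. borel) W UNIV"
  proof -
    have ind0: "indep_vars (\<lambda>_. borel) (\<lambda>j \<omega>. (\<lambda>f. ennreal (exp (s * (\<Sum>k\<in>K. c k * f (k, j))\<^sup>2))) (restrict (\<lambda>i. Z i \<omega>) (K \<times> {j}))) UNIV"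
      by (rule indep_vars_group[OF Z_indep]) (use ne in \<open>auto simp: disjoint_family_on_def\<close>)
    show ?thesis
      using ind0 by (rule indep_vars_cong[THEN iffD1, rotated 3]) (auto simp: W_def Uc_coord intro!: ext)
  qed
  ultimately have "(\<integral>\<^sup>+\<omega>. ennreal (exp (s * (norm (Uc c \<omega>))\<^sup>2)) \<partial>M) = (\<Prod>j\<in>UNIV. \<integral>\<^sup>+\<omega>. W j \<omega> \<partial>M)"
    by (simp add: indep_vars_nn_integral)
  also have "\<dots> = (\<Prod>j\<in>(UNIV::'d set). ennreal (1 / sqrt (1 - 2 * s * varc c)))"
  proof (intro prod.cong refl)
    fix j
    have "(\<integral>\<^sup>+\<omega>. W j \<omega> \<partial>M) = (\<integral>\<^sup>+x. ennreal (normal_density 0 (sqrt (varc c)) x) * ennreal (exp (s * x\<^sup>2)) \<partial>lborel)"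
      unfolding W_def by (rule distributed_nn_integral[OF Uc_coord_dist[OF ne], symmetric]) simp
    also have "\<dots> = ennreal (1 / sqrt (1 - 2 * s * (sqrt (varc c))\<^sup>2))"
      using exp_sq_normal_integral[of "sqrt (varc c)" s] vp s by (simp add: mult.commute)
    finally show "(\<integral>\<^sup>+\<omega>. W j \<omega> \<partial>M) = ennreal (1 / sqrt (1 - 2 * s * varc c))" using vp by simp
  qed
  also have "\<dots> = ennreal ((1 / sqrt (1 - 2 * s * varc c)) ^ CARD('d))"
    using s by (simp only: prod_constant, subst ennreal_power) auto
  finally show ?thesis .
qed

end

lemma amgm_exp_bound:
  fixes lam u a b X Y :: real
  assumes lam: "lam > 0" and u: "u > 0" and le: "a * X \<le> b * Y"
  shows "1 \<le> lam / 2 * exp (- (u * a / 2) * X) + 1 / (2 * lam) * exp (u * b / 2 * Y)"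
proof -
  define a1 where "a1 = exp (- (u * a / 4) * X)"
  define b1 where "b1 = exp (u * b / 4 * Y)"
  have e1: "exp (- (u * a / 2) * X) = a1\<^sup>2" unfolding a1_def power2_eq_square mult_exp_exp by simp
  have e2: "exp (u * b / 2 * Y) = b1\<^sup>2" unfolding b1_def power2_eq_square mult_exp_exp by simp
  have "a1 * b1 = exp (u / 4 * (b * Y - a * X))" unfolding a1_def b1_def mult_exp_exp
    by (rule arg_cong[where f=exp]) (simp add: algebra_simps)
  also have "\<dots> \<ge> 1" using u le by simp
  finally have ab: "1 \<le> a1 * b1" .
  have "a1 * b1 \<le> lam / 2 * a1\<^sup>2 + 1 / (2 * lam) * b1\<^sup>2"
  proof -
    have "0 \<le> (lam * a1 - b1)\<^sup>2 / (2 * lam)" using lam by simp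
    also have "(lam * a1 - b1)\<^sup>2 / (2 * lam) = lam / 2 * a1\<^sup>2 + 1 / (2 * lam) * b1\<^sup>2 - a1 * b1"
      using lam by (simp add: field_simps power2_eq_square)
    finally show ?thesis by simp
  qed
  then show ?thesis using ab e1 e2 by simp
qed

context hset begin

lemma move_bound:
  assumes nc: "{k\<in>K. c k \<noteq> 0} \<noteq> {}" and ne: "{k\<in>K. e k \<noteq> 0} \<noteq> {}"
    and a: "a > 0" and b: "b > 0" and AB: "a * varc c > b * varc e"
  shows "prob {\<omega>\<in>space M. a * (norm (Uc c \<omega>))\<^sup>2 \<le> b * (norm (Uc e \<omega>))\<^sup>2}
      \<le> (4 * (a * varc c) * (b * varc e) / (a * varc c + b * varc e)\<^sup>2) powr (real CARD('d) / 4)"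
proof -
  define A where "A = a * varc c"
  define B where "B = b * varc e"
  have Bp: "B > 0" unfolding B_def using b varc_pos[OF ne] by simp
  have Ap: "A > B" using AB unfolding A_def B_def .
  define u where "u = (A - B) / (2 * A * B)"
  have up: "u > 0" unfolding u_def using Ap Bp by simp
  define p where "p = 1 + u * A"
  define q where "q = 1 - u * B"
  have p_eq: "p = (A + B) / (2 * B)" unfolding p_def u_def using Ap Bp by (simp add: field_simps)
  have q_eq: "q = (A + B) / (2 * A)" unfolding q_def u_def using Ap Bp by (simp add: field_simps)
  have pp: "p > 0" and qp: "q > 0" using p_eq q_eq Ap Bp by auto
  define d where "d = real CARD('d)"
  define lam where "lam = (p / q) powr (d / 4)"
  have lp: "lam > 0" unfolding lam_def using pp qp by simp
  define s1 where "s1 = - (u * a / 2)"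
  define s2 where "s2 = u * b / 2"
  have s1: "1 - 2 * s1 * varc c = p" unfolding s1_def p_def A_def by simp
  have s2: "1 - 2 * s2 * varc e = q" unfolding s2_def q_def B_def by simp
  define Ev where "Ev = {\<omega>\<in>space M. a * (norm (Uc c \<omega>))\<^sup>2 \<le> b * (norm (Uc e \<omega>))\<^sup>2}"
  have Evm: "Ev \<in> sets M" unfolding Ev_def by measurable
  have "emeasure M Ev = (\<integral>\<^sup>+\<omega>. indicator Ev \<omega> \<partial>M)" using Evm by simp
  also have "\<dots> \<le> (\<integral>\<^sup>+\<omega>. ennreal (lam / 2) * ennreal (exp (s1 * (norm (Uc c \<omega>))\<^sup>2)) +
       ennreal (1 / (2 * lam)) * ennreal (exp (s2 * (norm (Uc e \<omega>))\<^sup>2)) \<partial>M)"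
  proof (intro nn_integral_mono)
    fix \<omega> assume "\<omega> \<in> space M"
    show "indicator Ev \<omega> \<le> ennreal (lam / 2) * ennreal (exp (s1 * (norm (Uc c \<omega>))\<^sup>2)) +
       ennreal (1 / (2 * lam)) * ennreal (exp (s2 * (norm (Uc e \<omega>))\<^sup>2))"
    proof (cases "\<omega> \<in> Ev")
      case True
      then have "a * (norm (Uc c \<omega>))\<^sup>2 \<le> b * (norm (Uc e \<omega>))\<^sup>2" by (simp add: Ev_def)
      from amgm_exp_bound[OF lp up this]
      have "1 \<le> lam / 2 * exp (s1 * (norm (Uc c \<omega>))\<^sup>2) + 1 / (2 * lam) * exp (s2 * (norm (Uc e \<omega>))\<^sup>2)"
        by (simp add: s1_def s2_def)
      then show ?thesis using True lp
        by (simp add: ennreal_mult'[symmetric] ennreal_plus[symmetric] del: ennreal_plus)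
    qed simp
  qed
  also have "\<dots> = ennreal (lam / 2) * (\<integral>\<^sup>+\<omega>. ennreal (exp (s1 * (norm (Uc c \<omega>))\<^sup>2)) \<partial>M) +
       ennreal (1 / (2 * lam)) * (\<integral>\<^sup>+\<omega>. ennreal (exp (s2 * (norm (Uc e \<omega>))\<^sup>2)) \<partial>M)"
    by (subst nn_integral_add) (auto simp: nn_integral_cmult)
  also have "\<dots> = ennreal (lam / 2 * (1 / sqrt p) ^ CARD('d) + 1 / (2 * lam) * (1 / sqrt q) ^ CARD('d))"
    using Uc_exp_sq[OF nc, of s1] Uc_exp_sq[OF ne, of s2] s1 s2 pp qp lp
    by (simp add: ennreal_mult'[symmetric] ennreal_plus[symmetric] del: ennreal_plus)
  finally have em: "emeasure M Ev \<le> ennreal (lam / 2 * (1 / sqrt p) ^ CARD('d) + 1 / (2 * lam) * (1 / sqrt q) ^ CARD('d))" .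
  have key: "lam / 2 * (1 / sqrt p) ^ CARD('d) + 1 / (2 * lam) * (1 / sqrt q) ^ CARD('d) = (1 / (p * q)) powr (d / 4)"
  proof -
    have sq: "(1 / sqrt x) ^ CARD('d) = 1 / (x powr (d / 4))\<^sup>2" if x: "x > 0" for x
    proof -
      have "(sqrt x) ^ CARD('d) = (x powr (1/2)) ^ CARD('d)" using x by (simp add: powr_half_sqrt)
      also have "\<dots> = x powr (d / 2)" using x by (simp add: powr_power d_def)
      also have "\<dots> = (x powr (d / 4))\<^sup>2" using x by (simp add: powr_power)
      finally show ?thesis by (simp add: power_one_over)
    qed
    have l: "lam = p powr (d / 4) / q powr (d / 4)" unfolding lam_def by (simp add: powr_divide)
    have r: "(1 / (p * q)) powr (d / 4) = 1 / (p powr (d / 4) * q powr (d / 4))"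
      using pp qp by (simp add: powr_divide powr_mult)
    have P: "p powr (d / 4) > 0" and Q: "q powr (d / 4) > 0" using pp qp by auto
    show ?thesis unfolding sq[OF pp] sq[OF qp] l r using P Q
      by (simp add: field_simps power2_eq_square)
  qed
  have "prob Ev \<le> lam / 2 * (1 / sqrt p) ^ CARD('d) + 1 / (2 * lam) * (1 / sqrt q) ^ CARD('d)"
  proof -
    define R where "R = lam / 2 * (1 / sqrt p) ^ CARD('d) + 1 / (2 * lam) * (1 / sqrt q) ^ CARD('d)"
    have "R \<ge> 0" unfolding R_def using lp pp qp by simp
    moreover have "ennreal (prob Ev) \<le> ennreal R" using em unfolding R_def[symmetric] emeasure_eq_measure .
    ultimately show ?thesis unfolding R_def[symmetric] by (simp add: ennreal_le_iff)
  qed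
  also have "\<dots> = (1 / (p * q)) powr (d / 4)" by (rule key)
  also have "1 / (p * q) = 4 * A * B / (A + B)\<^sup>2"
    unfolding p_eq q_eq using Ap Bp by (simp add: field_simps power2_eq_square)
  finally show ?thesis unfolding Ev_def A_def B_def d_def .
qed

end

locale hmain = prob_space M for M :: "'a measure" +
  fixes mu :: "nat \<Rightarrow> 'a \<Rightarrow> real ^ 'd" and xi :: "nat \<Rightarrow> 'a \<Rightarrow> real ^ 'd"
    and z :: "nat \<Rightarrow> nat" and n :: nat and tau sigma :: real
  assumes n4: "n \<ge> 4" and taup: "tau > 0" and sigmap: "sigma > 0"
    and dmu: "\<And>l. l \<in> {1, 2} \<Longrightarrow> distributed M lborel (mu l) (iso_gauss_density tau)"
    and dxi: "\<And>i. i \<in> {1..n} \<Longrightarrow> distributed M lborel (xi i) (iso_gauss_density sigma)"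
    and ind: "indep_vars (\<lambda>_. borel) (case_sum mu xi) (Inl ` {1, 2} \<union> Inr ` {1..n})"
    and zr: "\<And>i. i \<in> {1..n} \<Longrightarrow> z i \<in> {1, 2}"
    and S1ne: "{i\<in>{1..n}. z i = 1} \<noteq> {}" and S2ne: "{i\<in>{1..n}. z i = 2} \<noteq> {}"

sublocale hmain \<subseteq> hset M "case_sum mu xi" "Inl ` {1, 2} \<union> Inr ` {1..n}" "case_sum (\<lambda>_. tau) (\<lambda>_. sigma)"
proof
  show "finite (Inl ` {1, 2} \<union> Inr ` {1..n} :: (nat + nat) set)" by simp
  show "\<And>k. k \<in> Inl ` {1, 2} \<union> Inr ` {1..n} \<Longrightarrow> 0 < case_sum (\<lambda>_. tau) (\<lambda>_. sigma) k"
    using taup sigmap by auto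
  show "\<And>k. k \<in> Inl ` {1, 2} \<union> Inr ` {1..n} \<Longrightarrow> distributed M lborel (case_sum mu xi k) (iso_gauss_density (case_sum (\<lambda>_. tau) (\<lambda>_. sigma) k))"
    using dmu dxi by auto
  show "indep_vars (\<lambda>_. borel) (case_sum mu xi) (Inl ` {1, 2} \<union> Inr ` {1..n})" by (rule ind)
qed

context hmain begin

definition X :: "nat \<Rightarrow> 'a \<Rightarrow> real^'d" where
  "X l \<omega> = mu (z l) \<omega> + xi l \<omega>"

definition cf :: "(nat \<Rightarrow> real) \<Rightarrow> nat + nat \<Rightarrow> real" where
  "cf w = case_sum (\<lambda>c. \<Sum>l\<in>{l\<in>{1..n}. z l = c}. w l) w"

lemma sum_K:
  fixes f :: "nat + nat \<Rightarrow> 'b::comm_monoid_add"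
  shows "(\<Sum>k\<in>Inl ` {1, 2} \<union> Inr ` {1..n}. f k) = f (Inl 1) + f (Inl 2) + (\<Sum>l\<in>{1..n}. f (Inr l))"
proof -
  have "(\<Sum>k\<in>Inl ` {1, 2} \<union> Inr ` {1..n}. f k) = (\<Sum>k\<in>Inl ` {1::nat, 2}. f k) + (\<Sum>k\<in>Inr ` {1..n}. f k)"
    by (rule sum.union_disjoint) auto
  also have "(\<Sum>k\<in>Inl ` {1::nat, 2}. f k) = f (Inl 1) + f (Inl 2)" by simp
  also have "(\<Sum>k\<in>Inr ` {1..n}. f k) = (\<Sum>l\<in>{1..n}. f (Inr l))"
    by (subst sum.reindex) auto
  finally show ?thesis .
qed

lemma sum_by_class:
  fixes f :: "nat \<Rightarrow> 'b::comm_monoid_add"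
  shows "(\<Sum>l\<in>{1..n}. f l) = (\<Sum>l\<in>{l\<in>{1..n}. z l = 1}. f l) + (\<Sum>l\<in>{l\<in>{1..n}. z l = 2}. f l)"
proof -
  have h: "\<forall>l\<in>{1..n}. z l = 1 \<or> z l = 2" using zr by blast
  have e: "{1..n} = {l\<in>{1..n}. z l = 1} \<union> {l\<in>{1..n}. z l = 2}" using h by blast
  have "(\<Sum>l\<in>{1..n}. f l) = (\<Sum>l\<in>{l\<in>{1..n}. z l = 1} \<union> {l\<in>{1..n}. z l = 2}. f l)" by (rule sum.cong[OF e refl])
  also have "\<dots> = (\<Sum>l\<in>{l\<in>{1..n}. z l = 1}. f l) + (\<Sum>l\<in>{l\<in>{1..n}. z l = 2}. f l)"
    by (rule sum.union_disjoint) auto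
  finally show ?thesis .
qed

lemma Uc_cf: "Uc (cf w) \<omega> = (\<Sum>l\<in>{1..n}. w l *\<^sub>R X l \<omega>)"
proof -
  have "Uc (cf w) \<omega> = (\<Sum>l\<in>{l\<in>{1..n}. z l = 1}. w l) *\<^sub>R mu 1 \<omega> + (\<Sum>l\<in>{l\<in>{1..n}. z l = 2}. w l) *\<^sub>R mu 2 \<omega>
      + (\<Sum>l\<in>{1..n}. w l *\<^sub>R xi l \<omega>)"
    unfolding Uc_def sum_K by (simp add: cf_def)
  also have "(\<Sum>l\<in>{l\<in>{1..n}. z l = 1}. w l) *\<^sub>R mu 1 \<omega> + (\<Sum>l\<in>{l\<in>{1..n}. z l = 2}. w l) *\<^sub>R mu 2 \<omega>
      = (\<Sum>l\<in>{1..n}. w l *\<^sub>R mu (z l) \<omega>)"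
    unfolding sum_by_class[of "\<lambda>l. w l *\<^sub>R mu (z l) \<omega>"] by (simp add: scaleR_sum_left)
  finally show ?thesis by (simp add: X_def scaleR_add_right sum.distrib)
qed

lemma varc_cf: "varc (cf w) = tau\<^sup>2 * ((cf w (Inl 1))\<^sup>2 + (cf w (Inl 2))\<^sup>2) + sigma\<^sup>2 * (\<Sum>l\<in>{1..n}. (w l)\<^sup>2)"
  unfolding varc_def sum_K by (simp add: cf_def algebra_simps sum_distrib_left)

definition wt :: "nat \<Rightarrow> nat set \<Rightarrow> real \<Rightarrow> nat \<Rightarrow> real" where
  "wt i C g l = (if l = i then 1 else 0) - (if l \<in> C then g else 0)"

lemma lin_wt:
  assumes "i \<in> {1..n}" "C \<subseteq> {1..n}"
  shows "(\<Sum>l\<in>{1..n}. wt i C g l *\<^sub>R X l \<omega>) = X i \<omega> - g *\<^sub>R (\<Sum>l\<in>C. X l \<omega>)"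
proof -
  have "(\<Sum>l\<in>{1..n}. wt i C g l *\<^sub>R X l \<omega>) = (\<Sum>l\<in>{1..n}. (if l = i then X l \<omega> else 0)) - (\<Sum>l\<in>{1..n}. (if l \<in> C then g *\<^sub>R X l \<omega> else 0))"
    by (simp add: wt_def scaleR_diff_left sum_subtractf if_distrib[of "\<lambda>x. x *\<^sub>R X _ \<omega>"] cong: if_cong)
  also have "(\<Sum>l\<in>{1..n}. (if l \<in> C then g *\<^sub>R X l \<omega> else 0)) = (\<Sum>l\<in>{1..n} \<inter> C. g *\<^sub>R X l \<omega>)"
    by (rule sum.inter_restrict[symmetric]) simp
  also have "{1..n} \<inter> C = C" using assms by auto
  finally show ?thesis using assms by (simp add: scaleR_sum_right)
qed

lemma sumsq_wt:
  assumes "i \<in> {1..n}" "C \<subseteq> {1..n}"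
  shows "(\<Sum>l\<in>{1..n}. (wt i C g l)\<^sup>2) = 1 - (if i \<in> C then 2 * g else 0) + g\<^sup>2 * card C"
proof -
  have "(\<Sum>l\<in>{1..n}. (wt i C g l)\<^sup>2) = (\<Sum>l\<in>{1..n}. (if l = i then 1 - (if i \<in> C then 2 * g else 0) else 0) + (if l \<in> C then g\<^sup>2 else 0))"
    by (intro sum.cong refl) (auto simp: wt_def power2_eq_square algebra_simps)
  also have "\<dots> = (1 - (if i \<in> C then 2 * g else 0)) + (\<Sum>l\<in>{1..n}. (if l \<in> C then g\<^sup>2 else 0))"
    using assms by (simp add: sum.distrib)
  also have "(\<Sum>l\<in>{1..n}. (if l \<in> C then g\<^sup>2 else 0)) = (\<Sum>l\<in>{1..n} \<inter> C. g\<^sup>2)"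
    by (rule sum.inter_restrict[symmetric]) simp
  also have "{1..n} \<inter> C = C" using assms by auto
  finally show ?thesis by simp
qed

lemma cf_wt:
  assumes "i \<in> {1..n}" "C \<subseteq> {1..n}"
  shows "cf (wt i C g) (Inl c) = (if z i = c then 1 else 0) - g * card {l\<in>C. z l = c}"
proof -
  have "cf (wt i C g) (Inl c) = (\<Sum>l\<in>{l\<in>{1..n}. z l = c}. (if l = i then 1 else 0)) - (\<Sum>l\<in>{l\<in>{1..n}. z l = c}. (if l \<in> C then g else 0))"
    by (simp add: cf_def wt_def sum_subtractf)
  also have "(\<Sum>l\<in>{l\<in>{1..n}. z l = c}. (if l \<in> C then g else 0)) = (\<Sum>l\<in>{l\<in>{1..n}. z l = c} \<inter> C. g)"
    by (rule sum.inter_restrict[symmetric]) simp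
  also have "{l\<in>{1..n}. z l = c} \<inter> C = {l\<in>C. z l = c}" using assms by auto
  finally show ?thesis using assms by simp
qed

end

lemma ratio_bound:
  fixes s t E1 E2 :: real
  assumes s: "s > 0" and t: "t > 0" and th: "th > 0" and E2: "0 \<le> E2" and E1: "E1 \<le> 1" and D: "E1 - E2 \<ge> th"
  defines "A \<equiv> s\<^sup>2 + 2 * t\<^sup>2 * E1" and "B \<equiv> s\<^sup>2 + 2 * t\<^sup>2 * E2"
  shows "A > B" and "4 * A * B / (A + B)\<^sup>2 \<le> 1 - (t\<^sup>2 * th / (3 * t\<^sup>2 + s\<^sup>2))\<^sup>2"
proof -
  have t2: "t\<^sup>2 > 0" using t by simp
  have s2: "s\<^sup>2 > 0" using s by simp
  show AB: "A > B" unfolding A_def B_def using D th t2 by simp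
  have Bp: "B > 0" unfolding B_def using s2 t2 E2 by (simp add: add_pos_nonneg)
  have ApB: "A + B > 0" using AB Bp by simp
  have id: "4 * A * B / (A + B)\<^sup>2 = 1 - ((A - B) / (A + B))\<^sup>2"
  proof -
    have nz: "(A + B)\<^sup>2 \<noteq> 0" using ApB by simp
    have "1 - ((A - B) / (A + B))\<^sup>2 = ((A + B)\<^sup>2 - (A - B)\<^sup>2) / (A + B)\<^sup>2"
    proof -
      have "((A - B) / (A + B))\<^sup>2 = (A - B)\<^sup>2 / (A + B)\<^sup>2" by (rule power_divide)
      moreover have "1 = (A + B)\<^sup>2 / (A + B)\<^sup>2" using nz by simp
      ultimately show ?thesis by (metis diff_divide_distrib)
    qed
    also have "(A + B)\<^sup>2 - (A - B)\<^sup>2 = 4 * A * B" by (simp add: power2_eq_square algebra_simps)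
    finally show ?thesis by simp
  qed
  have AmB: "A - B = 2 * t\<^sup>2 * (E1 - E2)" unfolding A_def B_def by (simp add: algebra_simps)
  have ApB': "A + B \<le> 2 * (3 * t\<^sup>2 + s\<^sup>2)"
  proof -
    have "E1 + E2 \<le> 2" using D th E1 by simp
    then have "t\<^sup>2 * (E1 + E2) \<le> t\<^sup>2 * 2" using t2 by (intro mult_left_mono) auto
    then have "2 * t\<^sup>2 * E1 + 2 * t\<^sup>2 * E2 \<le> 4 * t\<^sup>2" by (simp add: algebra_simps)
    then show ?thesis unfolding A_def B_def using t2 by (smt (verit))
  qed
  have lb0: "0 \<le> t\<^sup>2 * th / (3 * t\<^sup>2 + s\<^sup>2)" using t2 th s2 by simp
  have lb: "t\<^sup>2 * th / (3 * t\<^sup>2 + s\<^sup>2) \<le> (A - B) / (A + B)"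
  proof -
    have "t\<^sup>2 * th / (3 * t\<^sup>2 + s\<^sup>2) = 2 * t\<^sup>2 * th / (2 * (3 * t\<^sup>2 + s\<^sup>2))" using mult_divide_mult_cancel_left_if[of 2 "t\<^sup>2 * th" "3 * t\<^sup>2 + s\<^sup>2"] by (simp add: mult.assoc)
    also have "\<dots> \<le> 2 * t\<^sup>2 * th / (A + B)"
      using ApB ApB' t2 th by (intro divide_left_mono) auto
    also have "\<dots> \<le> (A - B) / (A + B)"
      unfolding AmB using ApB t2 D by (intro divide_right_mono) auto
    finally show ?thesis .
  qed
  have "(t\<^sup>2 * th / (3 * t\<^sup>2 + s\<^sup>2))\<^sup>2 \<le> ((A - B) / (A + B))\<^sup>2"
    using lb lb0 by (intro power_mono) auto
  then show "4 * A * B / (A + B)\<^sup>2 \<le> 1 - (t\<^sup>2 * th / (3 * t\<^sup>2 + s\<^sup>2))\<^sup>2" unfolding id by simp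
qed

context hmain begin

lemma card_cls:
  assumes "C \<subseteq> {1..n}"
  shows "card {l\<in>C. z l = 1} + card {l\<in>C. z l = 2} = card C"
proof -
  have f: "finite C" using assms finite_subset by blast
  have "C = {l\<in>C. z l = 1} \<union> {l\<in>C. z l = 2}" using assms zr by fastforce
  then have "card C = card ({l\<in>C. z l = 1} \<union> {l\<in>C. z l = 2})" by simp
  also have "\<dots> = card {l\<in>C. z l = 1} + card {l\<in>C. z l = 2}"
    using f by (intro card_Un_disjoint) auto
  finally show ?thesis by simp
qed

lemma other_cls:
  assumes "C \<subseteq> {1..n}" "c \<in> {1, 2}"
  shows "{l\<in>C. z l \<noteq> c} = {l\<in>C. z l = 3 - c}"
  using assms zr by fastforce

lemma W_sq:
  assumes i: "i \<in> {1..n}" and C: "C \<subseteq> {1..n}" "C \<noteq> {}"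
  shows "(cf (wt i C (1 / card C)) (Inl 1))\<^sup>2 + (cf (wt i C (1 / card C)) (Inl 2))\<^sup>2 =
    2 * (real (card {l\<in>C. z l \<noteq> z i}) / card C)\<^sup>2"
proof -
  have fC: "finite C" using C finite_subset by blast
  have m: "real (card C) > 0" using fC C by (simp add: card_gt_0_iff)
  have cc: "real (card {l\<in>C. z l = 1}) + real (card {l\<in>C. z l = 2}) = real (card C)"
    using card_cls[OF C(1)] by (metis of_nat_add)
  have zi: "z i \<in> {1, 2}" using zr i by blast
  show ?thesis
  proof (cases "z i = 1")
    case True
    have o: "{l\<in>C. z l \<noteq> z i} = {l\<in>C. z l = 2}" using other_cls[OF C(1), of 1] True by simp
    have p: "real (card {l\<in>C. z l = 1}) = real (card C) - real (card {l\<in>C. z l = 2})" using cc by simp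
    show ?thesis unfolding cf_wt[OF i C(1)] o p using True m
      by (simp add: field_simps power2_eq_square)
  next
    case False
    then have T: "z i = 2" using zi by auto
    have o: "{l\<in>C. z l \<noteq> z i} = {l\<in>C. z l = 1}" using other_cls[OF C(1), of 2] T by simp
    have p: "real (card {l\<in>C. z l = 2}) = real (card C) - real (card {l\<in>C. z l = 1})" using cc by simp
    show ?thesis unfolding cf_wt[OF i C(1)] o p using T m
      by (simp add: field_simps power2_eq_square)
  qed
qed

lemma varc_wt:
  assumes i: "i \<in> {1..n}" and C: "C \<subseteq> {1..n}" "C \<noteq> {}"
  shows "varc (cf (wt i C (1 / card C))) =
    tau\<^sup>2 * (2 * (real (card {l\<in>C. z l \<noteq> z i}) / card C)\<^sup>2) +
    sigma\<^sup>2 * (1 - (if i \<in> C then 2 / card C else 0) + 1 / card C)"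
proof -
  have fC: "finite C" using C finite_subset by blast
  have m: "real (card C) > 0" using fC C by (simp add: card_gt_0_iff)
  show ?thesis unfolding varc_cf W_sq[OF assms] sumsq_wt[OF i C(1)] using m
    by (simp add: power2_eq_square)
qed

lemma hd_Uc:
  assumes i: "i \<in> {1..n}" and C: "C \<subseteq> {1..n}"
  shows "hartigan_dist (\<lambda>l. X l \<omega>) C i =
    (if i \<in> C then real (card C) / (real (card C) - 1) else real (card C) / (real (card C) + 1)) *
    (norm (Uc (cf (wt i C (1 / card C))) \<omega>))\<^sup>2"
  unfolding hartigan_dist_def Uc_cf lin_wt[OF i C] centroid_def by simp

end

context hmain begin

lemma move_prob:
  assumes C: "C \<subseteq> {1..n}" and i: "i \<in> C" and mC: "card C \<ge> 2" and C'ne: "{1..n} - C \<noteq> {}"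
    and thr: "thr > 0"
    and D: "(real (card {l\<in>C. z l \<noteq> z i}))\<^sup>2 / (real (card C) * (real (card C) - 1))
          - (real (card {l\<in>({1..n} - C). z l \<noteq> z i}))\<^sup>2 / (real (card ({1..n} - C)) * (real (card ({1..n} - C)) + 1)) \<ge> thr"
  shows "prob {\<omega>\<in>space M. hartigan_dist (\<lambda>l. X l \<omega>) C i \<le> hartigan_dist (\<lambda>l. X l \<omega>) ({1..n} - C) i}
     \<le> (1 - (tau\<^sup>2 * thr / (3 * tau\<^sup>2 + sigma\<^sup>2))\<^sup>2) powr (real CARD('d) / 4)"
proof -
  define C' where "C' = {1..n} - C"
  define m where "m = real (card C)"
  define m' where "m' = real (card C')"
  define o1 where "o1 = real (card {l\<in>C. z l \<noteq> z i})"
  define o2 where "o2 = real (card {l\<in>C'. z l \<noteq> z i})"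
  define cU where "cU = cf (wt i C (1 / card C))"
  define cV where "cV = cf (wt i C' (1 / card C'))"
  define a where "a = m / (m - 1)"
  define b where "b = m' / (m' + 1)"
  have in1: "i \<in> {1..n}" using C i by auto
  have C': "C' \<subseteq> {1..n}" "C' \<noteq> {}" using C'ne by (auto simp: C'_def)
  have iC': "i \<notin> C'" using i by (auto simp: C'_def)
  have Cne: "C \<noteq> {}" using i by auto
  have fC: "finite C" using C finite_subset by blast
  have fC': "finite C'" using C' finite_subset by blast
  have m2: "m \<ge> 2" using mC by (simp add: m_def)
  have m'1: "m' \<ge> 1" using C' fC' by (simp add: m'_def Suc_le_eq card_gt_0_iff)
  have ap: "a > 0" using m2 by (simp add: a_def)
  have bp: "b > 0" using m'1 by (simp add: b_def)
  have ev: "{\<omega>\<in>space M. hartigan_dist (\<lambda>l. X l \<omega>) C i \<le> hartigan_dist (\<lambda>l. X l \<omega>) C' i} =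
     {\<omega>\<in>space M. a * (norm (Uc cU \<omega>))\<^sup>2 \<le> b * (norm (Uc cV \<omega>))\<^sup>2}"
    using hd_Uc[OF in1 C] hd_Uc[OF in1 C'(1)] i iC'
    by (simp add: a_def b_def m_def m'_def cU_def cV_def)
  have KU: "{k \<in> Inl ` {1, 2} \<union> Inr ` {1..n}. cU k \<noteq> 0} \<noteq> {}"
  proof -
    have "cU (Inr i) \<noteq> 0" using m2 i by (simp add: cU_def cf_def wt_def m_def)
    then show ?thesis using in1 by blast
  qed
  have KV: "{k \<in> Inl ` {1, 2} \<union> Inr ` {1..n}. cV k \<noteq> 0} \<noteq> {}"
  proof -
    have "cV (Inr i) \<noteq> 0" using iC' by (simp add: cV_def cf_def wt_def)
    then show ?thesis using in1 by blast
  qed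
  have A: "a * varc cU = sigma\<^sup>2 + 2 * tau\<^sup>2 * (o1\<^sup>2 / (m * (m - 1)))"
  proof -
    have vU: "varc cU = tau\<^sup>2 * (2 * (o1 / m)\<^sup>2) + sigma\<^sup>2 * (1 - 2 / m + 1 / m)"
      unfolding cU_def varc_wt[OF in1 C Cne] using i by (simp add: o1_def m_def)
    have m0: "m \<noteq> 0" "m - 1 \<noteq> 0" using m2 by auto
    have p1: "m / (m - 1) * (tau\<^sup>2 * (2 * (o1 / m)\<^sup>2)) = 2 * tau\<^sup>2 * (o1\<^sup>2 / (m * (m - 1)))"
      using m0 by (simp add: field_simps power2_eq_square)
    have q: "1 - 2 / m + 1 / m = (m - 1) / m" using m0 by (simp add: field_simps)
    have p2: "m / (m - 1) * (sigma\<^sup>2 * (1 - 2 / m + 1 / m)) = sigma\<^sup>2"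
      unfolding q using m0 by simp
    show ?thesis unfolding a_def vU by (metis distrib_left p1 p2 add.commute)
  qed
  have B: "b * varc cV = sigma\<^sup>2 + 2 * tau\<^sup>2 * (o2\<^sup>2 / (m' * (m' + 1)))"
  proof -
    have vV: "varc cV = tau\<^sup>2 * (2 * (o2 / m')\<^sup>2) + sigma\<^sup>2 * (1 + 1 / m')"
      unfolding cV_def varc_wt[OF in1 C'] using iC' by (simp add: o2_def m'_def)
    have m0: "m' \<noteq> 0" "m' + 1 \<noteq> 0" using m'1 by auto
    have p1: "m' / (m' + 1) * (tau\<^sup>2 * (2 * (o2 / m')\<^sup>2)) = 2 * tau\<^sup>2 * (o2\<^sup>2 / (m' * (m' + 1)))"
    proof -
      have "m' / (m' + 1) * (tau\<^sup>2 * (2 * (o2 / m')\<^sup>2)) = (2 * tau\<^sup>2 * o2\<^sup>2) * (m' / ((m' + 1) * (m' * m')))"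
        by (simp add: power_divide power2_eq_square)
      also have "m' / ((m' + 1) * (m' * m')) = 1 / (m' * (m' + 1))"
      proof -
        have "(m' + 1) * (m' * m') = m' * (m' * (m' + 1))" by (simp add: algebra_simps)
        then show ?thesis using m0 by (simp del: mult_eq_0_iff)
      qed
      finally show ?thesis by simp
    qed
    have q: "1 + 1 / m' = (m' + 1) / m'" using m0 by (simp add: field_simps)
    have p2: "m' / (m' + 1) * (sigma\<^sup>2 * (1 + 1 / m')) = sigma\<^sup>2"
      unfolding q using m0 by simp
    show ?thesis unfolding b_def vV by (metis distrib_left p1 p2 add.commute)
  qed
  have E2: "0 \<le> o2\<^sup>2 / (m' * (m' + 1))" using m'1 by simp
  have E1: "o1\<^sup>2 / (m * (m - 1)) \<le> 1"
  proof -
    have "{l\<in>C. z l \<noteq> z i} \<subseteq> C - {i}" by auto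
    then have "card {l\<in>C. z l \<noteq> z i} \<le> card (C - {i})" using fC by (intro card_mono) auto
    then have "card {l\<in>C. z l \<noteq> z i} + 1 \<le> card C" using fC i mC by simp
    then have "o1 + 1 \<le> m" unfolding o1_def m_def by (metis of_nat_1 of_nat_add of_nat_le_iff)
    then have "o1 \<le> m - 1" by simp
    moreover have "o1 \<ge> 0" by (simp add: o1_def)
    ultimately have "o1\<^sup>2 \<le> (m - 1)\<^sup>2" by (intro power_mono) auto
    also have "\<dots> \<le> m * (m - 1)" using m2 by (simp add: power2_eq_square)
    finally show ?thesis using m2 by simp
  qed
  have Dth: "o1\<^sup>2 / (m * (m - 1)) - o2\<^sup>2 / (m' * (m' + 1)) \<ge> thr"
    using D by (simp add: o1_def o2_def m_def m'_def C'_def)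
  note rb = ratio_bound[OF sigmap taup thr E2 E1 Dth]
  have "prob {\<omega>\<in>space M. a * (norm (Uc cU \<omega>))\<^sup>2 \<le> b * (norm (Uc cV \<omega>))\<^sup>2}
      \<le> (4 * (a * varc cU) * (b * varc cV) / (a * varc cU + b * varc cV)\<^sup>2) powr (real CARD('d) / 4)"
    by (rule move_bound[OF KU KV ap bp]) (use rb(1) A B in simp)
  also have "\<dots> \<le> (1 - (tau\<^sup>2 * thr / (3 * tau\<^sup>2 + sigma\<^sup>2))\<^sup>2) powr (real CARD('d) / 4)"
  proof (rule powr_mono2)
    have "a * varc cV > 0" using varc_pos[OF KV] ap by simp
    have "0 < b * varc cV" using varc_pos[OF KV] bp by simp
    moreover have "0 < a * varc cU" using varc_pos[OF KU] ap by simp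
    ultimately show "0 \<le> 4 * (a * varc cU) * (b * varc cV) / (a * varc cU + b * varc cV)\<^sup>2" by simp
    show "4 * (a * varc cU) * (b * varc cV) / (a * varc cU + b * varc cV)\<^sup>2 \<le> 1 - (tau\<^sup>2 * thr / (3 * tau\<^sup>2 + sigma\<^sup>2))\<^sup>2"
      unfolding A B by (rule rb(2))
  qed simp
  finally show ?thesis unfolding ev[unfolded C'_def] .
qed

end

definition Dm :: "real \<Rightarrow> real \<Rightarrow> real \<Rightarrow> real \<Rightarrow> real" where
  "Dm o1 m o2 m' = o1\<^sup>2 / (m * (m - 1)) - o2\<^sup>2 / (m' * (m' + 1))"

lemma inv_sum_ge: "u > 0 \<Longrightarrow> v > 0 \<Longrightarrow> 1 / u + 1 / v \<ge> 4 / (u + v :: real)"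
proof -
  assume u: "u > 0" and v: "v > 0"
  have "4 * u * v \<le> (u + v)\<^sup>2" using sum_squares_ge_zero[of "u - v" 0]
    by (simp add: power2_eq_square algebra_simps)
  then have "4 / (u + v) \<le> (u + v) / (u * v)" using u v by (simp add: field_simps power2_eq_square)
  also have "\<dots> = 1 / u + 1 / v" using u v by (simp add: field_simps)
  finally show ?thesis .
qed

lemma key_real:
  fixes p1 p2 m1 m2 :: real
  assumes m1: "m1 \<ge> 2" and m2: "m2 \<ge> 2" and p: "0 \<le> p2" "p2 \<le> p1" "p1 \<le> 1"
  shows "(p1\<^sup>2 + p1\<^sup>2 / (m1 - 1) - (p2\<^sup>2 - p2\<^sup>2 / (m2 + 1))) +
         ((1 - p2)\<^sup>2 + (1 - p2)\<^sup>2 / (m2 - 1) - ((1 - p1)\<^sup>2 - (1 - p1)\<^sup>2 / (m1 + 1))) \<ge> 2 / (m1 + m2)"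
proof -
  define d where "d = p1 - p2"
  define n where "n = m1 + m2"
  have n: "n \<ge> 4" using m1 m2 by (simp add: n_def)
  have d: "0 \<le> d" "d \<le> 1" using p by (auto simp: d_def)
  have first: "p1\<^sup>2 - p2\<^sup>2 + (1 - p2)\<^sup>2 - (1 - p1)\<^sup>2 = 2 * d"
    by (simp add: d_def power2_eq_square algebra_simps)
  have g1: "p1\<^sup>2 / (m1 - 1) \<ge> p2\<^sup>2 / (m1 - 1)" using p m1 by (intro divide_right_mono power_mono) auto
  have g2: "(1 - p2)\<^sup>2 / (m2 - 1) \<ge> (1 - p1)\<^sup>2 / (m2 - 1)" using p m2 by (intro divide_right_mono power_mono) auto
  have h1: "p2\<^sup>2 / (m1 - 1) + p2\<^sup>2 / (m2 + 1) \<ge> p2\<^sup>2 * (4 / n)"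
  proof -
    have "1 / (m1 - 1) + 1 / (m2 + 1) \<ge> 4 / ((m1 - 1) + (m2 + 1))" using m1 m2 by (intro inv_sum_ge) auto
    then have "p2\<^sup>2 * (4 / n) \<le> p2\<^sup>2 * (1 / (m1 - 1) + 1 / (m2 + 1))" by (intro mult_left_mono) (auto simp: n_def)
    then show ?thesis by (simp add: distrib_left)
  qed
  have h2: "(1 - p1)\<^sup>2 / (m2 - 1) + (1 - p1)\<^sup>2 / (m1 + 1) \<ge> (1 - p1)\<^sup>2 * (4 / n)"
  proof -
    have "1 / (m2 - 1) + 1 / (m1 + 1) \<ge> 4 / ((m2 - 1) + (m1 + 1))" using m1 m2 by (intro inv_sum_ge) auto
    then have "(1 - p1)\<^sup>2 * (4 / n) \<le> (1 - p1)\<^sup>2 * (1 / (m2 - 1) + 1 / (m1 + 1))" by (intro mult_left_mono) (auto simp: n_def add.commute)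
    then show ?thesis by (simp add: distrib_left)
  qed
  have h3: "p2\<^sup>2 + (1 - p1)\<^sup>2 \<ge> (1 - d)\<^sup>2 / 2"
  proof -
    have "(1 - d)\<^sup>2 = (p2 + (1 - p1))\<^sup>2" by (simp add: d_def algebra_simps)
    also have "\<dots> \<le> 2 * (p2\<^sup>2 + (1 - p1)\<^sup>2)" using sum_squares_ge_zero[of "p2 - (1 - p1)" 0]
      by (simp add: power2_eq_square algebra_simps)
    finally show ?thesis by simp
  qed
  have rest: "(p2\<^sup>2 + (1 - p1)\<^sup>2) * (4 / n) \<ge> 2 * (1 - d)\<^sup>2 / n"
  proof -
    have "(1 - d)\<^sup>2 / 2 * (4 / n) \<le> (p2\<^sup>2 + (1 - p1)\<^sup>2) * (4 / n)" using h3 n by (intro mult_right_mono) auto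
    then show ?thesis by simp
  qed
  have rest': "p2\<^sup>2 * (4 / n) + (1 - p1)\<^sup>2 * (4 / n) \<ge> 2 * (1 - d)\<^sup>2 / n"
    using rest by (simp only: distrib_right)
  have fin: "2 * d + 2 * (1 - d)\<^sup>2 / n \<ge> 2 / n"
  proof -
    have e: "2 * d * n + 2 * (1 - d)\<^sup>2 - 2 = 2 * d * (n - 2) + 2 * d\<^sup>2"
      by (simp add: power2_eq_square algebra_simps)
    have "0 \<le> 2 * d * (n - 2) + 2 * d\<^sup>2" using d n by simp
    then have "2 * d * n + 2 * (1 - d)\<^sup>2 \<ge> 2" using e by linarith
    then show ?thesis using n by (simp add: field_simps)
  qed
  have "(p1\<^sup>2 + p1\<^sup>2 / (m1 - 1) - (p2\<^sup>2 - p2\<^sup>2 / (m2 + 1))) +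
         ((1 - p2)\<^sup>2 + (1 - p2)\<^sup>2 / (m2 - 1) - ((1 - p1)\<^sup>2 - (1 - p1)\<^sup>2 / (m1 + 1)))
      = 2 * d + (p1\<^sup>2 / (m1 - 1) + p2\<^sup>2 / (m2 + 1) + (1 - p2)\<^sup>2 / (m2 - 1) + (1 - p1)\<^sup>2 / (m1 + 1))"
    using first by (simp add: algebra_simps)
  also have "\<dots> \<ge> 2 * d + 2 * (1 - d)\<^sup>2 / n" using g1 g2 h1 h2 rest' by linarith
  finally show ?thesis using fin n_def by simp
qed

lemma idA: "m > 1 \<Longrightarrow> x\<^sup>2 / (m * (m - 1)) = (x / m)\<^sup>2 + (x / m)\<^sup>2 / (m - 1)" for x m :: real
  by (simp add: field_simps power2_eq_square)

lemma idB: "m > 0 \<Longrightarrow> x\<^sup>2 / (m * (m + 1)) = (x / m)\<^sup>2 - (x / m)\<^sup>2 / (m + 1)" for x m :: real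
proof -
  assume m: "m > 0"
  have "(x / m)\<^sup>2 - (x / m)\<^sup>2 / (m + 1) = (x / m)\<^sup>2 * (1 - 1 / (m + 1))" by (simp add: algebra_simps)
  also have "1 - 1 / (m + 1) = m / (m + 1)" using m by (simp add: field_simps)
  also have "(x / m)\<^sup>2 * (m / (m + 1)) = (m * x\<^sup>2) / (m * (m * (m + 1)))"
    by (simp add: power_divide power2_eq_square mult.assoc)
  also have "\<dots> = x\<^sup>2 / (m * (m + 1))" using m by (intro mult_divide_mult_cancel_left) simp
  finally show ?thesis by simp
qed

lemma single_bound:
  fixes x m n mn :: real
  assumes "mn \<le> x" "0 \<le> mn" "2 \<le> m" "m \<le> n" "n \<ge> 4"
  shows "4 * (mn / n)\<^sup>2 / n \<le> x\<^sup>2 / (m * (m - 1))"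
proof -
  have "4 * (mn / n)\<^sup>2 \<le> n * (mn / n)\<^sup>2" using assms by (intro mult_right_mono) auto
  then have "4 * (mn / n)\<^sup>2 / n \<le> (mn / n)\<^sup>2"
    using assms by (simp add: field_simps)
  also have "\<dots> = mn\<^sup>2 / n\<^sup>2" by (simp add: power_divide)
  also have "\<dots> \<le> x\<^sup>2 / n\<^sup>2" using assms by (intro divide_right_mono power_mono) auto
  also have "\<dots> \<le> x\<^sup>2 / (m * (m - 1))"
  proof (rule divide_left_mono)
    have "m * (m - 1) \<le> n * n" using assms by (intro mult_mono) auto
    then show "m * (m - 1) \<le> n\<^sup>2" by (simp add: power2_eq_square)
    show "0 < n\<^sup>2 * (m * (m - 1))" using assms by simp
  qed simp
  finally show ?thesis .
qed

lemma comb_half: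
  fixes a1 b1 a2 b2 :: nat
  assumes N1: "a1 + a2 \<ge> 1" and N2: "b1 + b2 \<ge> 1" and n4: "a1 + b1 + a2 + b2 \<ge> 4"
    and inc1: "\<not> (b1 = 0 \<and> a2 = 0)" and inc2: "\<not> (a1 = 0 \<and> b2 = 0)"
    and ord: "b1 * (a2 + b2) \<ge> b2 * (a1 + b1)"
  defines "n \<equiv> real (a1 + b1 + a2 + b2)"
  defines "t \<equiv> 4 * (real (min (a1 + a2) (b1 + b2)) / n)\<^sup>2 / n"
  shows "(a1 \<ge> 1 \<and> a1 + b1 \<ge> 2 \<and> Dm b1 (a1 + b1) b2 (a2 + b2) \<ge> t) \<or>
         (b2 \<ge> 1 \<and> a2 + b2 \<ge> 2 \<and> Dm a2 (a2 + b2) a1 (a1 + b1) \<ge> t)"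
proof -
  have nn: "n \<ge> 4" using n4 unfolding n_def by simp
  define mn where "mn = real (min (a1 + a2) (b1 + b2))"
  have mn0: "0 \<le> mn" by (simp add: mn_def)
  show ?thesis
  proof (cases "a1 = 0")
    case True
    then have b2: "b2 \<ge> 1" using inc2 by simp
    have a2: "a2 \<ge> 1" using N1 True by simp
    have "t \<le> (real a2)\<^sup>2 / (real (a2 + b2) * (real (a2 + b2) - 1))"
      unfolding t_def mn_def[symmetric]
      by (rule single_bound) (use True a2 b2 nn in \<open>auto simp: mn_def n_def\<close>)
    then have "Dm a2 (a2 + b2) a1 (a1 + b1) \<ge> t" using True by (simp add: Dm_def)
    then show ?thesis using a2 b2 by auto
  next
    case a1: False
    show ?thesis
    proof (cases "b2 = 0")
      case True
      then have b1: "b1 \<ge> 1" using N2 by simp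
      have "t \<le> (real b1)\<^sup>2 / (real (a1 + b1) * (real (a1 + b1) - 1))"
        unfolding t_def mn_def[symmetric]
        by (rule single_bound) (use True a1 b1 nn in \<open>auto simp: mn_def n_def\<close>)
      then have "Dm b1 (a1 + b1) b2 (a2 + b2) \<ge> t" using True by (simp add: Dm_def)
      then show ?thesis using a1 b1 by auto
    next
      case b2: False
      have b1: "b1 \<ge> 1"
      proof (rule ccontr)
        assume "\<not> b1 \<ge> 1"
        then have "b1 = 0" by simp
        then show False using ord a1 b2 by simp
      qed
      have a2: "a2 \<ge> 1"
      proof (rule ccontr)
        assume "\<not> a2 \<ge> 1"
        then have "a2 = 0" by simp
        then have "b1 * b2 \<ge> b2 * (a1 + b1)" using ord by simp
        then have "b1 \<ge> a1 + b1" using b2 by (simp add: mult.commute)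
        then show False using a1 by simp
      qed
      define m1 where "m1 = real (a1 + b1)"
      define m2 where "m2 = real (a2 + b2)"
      have m1: "m1 \<ge> 2" using a1 b1 by (simp add: m1_def)
      have m2: "m2 \<ge> 2" using a2 b2 by (simp add: m2_def)
      define p1 where "p1 = real b1 / m1"
      define p2 where "p2 = real b2 / m2"
      have q1: "real a1 / m1 = 1 - p1" using m1 by (simp add: p1_def m1_def field_simps)
      have q2: "real a2 / m2 = 1 - p2" using m2 by (simp add: p2_def m2_def field_simps)
      have p12: "p2 \<le> p1"
      proof -
        have "real b2 * m1 \<le> real b1 * m2" using ord unfolding m1_def m2_def
          by (metis of_nat_add of_nat_mult of_nat_le_iff mult.commute)
        then show ?thesis using m1 m2 by (simp add: p1_def p2_def field_simps)
      qed
      have p2: "0 \<le> p2" using m2 by (simp add: p2_def)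
      have p1: "p1 \<le> 1" using m1 by (simp add: p1_def m1_def)
      have D1: "Dm b1 (a1 + b1) b2 (a2 + b2) = p1\<^sup>2 + p1\<^sup>2 / (m1 - 1) - (p2\<^sup>2 - p2\<^sup>2 / (m2 + 1))"
        unfolding Dm_def m1_def[symmetric] m2_def[symmetric] p1_def p2_def
        using m1 m2 by (simp add: idA idB)
      have D2: "Dm a2 (a2 + b2) a1 (a1 + b1) = (1 - p2)\<^sup>2 + (1 - p2)\<^sup>2 / (m2 - 1) - ((1 - p1)\<^sup>2 - (1 - p1)\<^sup>2 / (m1 + 1))"
        unfolding Dm_def m1_def[symmetric] m2_def[symmetric] q1[symmetric] q2[symmetric]
        using m1 m2 by (simp add: idA idB)
      have sum: "Dm b1 (a1 + b1) b2 (a2 + b2) + Dm a2 (a2 + b2) a1 (a1 + b1) \<ge> 2 / n"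
        unfolding D1 D2 using key_real[OF m1 m2 p2 p12 p1] by (simp add: n_def m1_def m2_def add_ac)
      have "t \<le> 1 / n"
      proof -
        have "2 * min (a1 + a2) (b1 + b2) \<le> a1 + b1 + a2 + b2" by (auto simp: min_def)
        then have "2 * mn \<le> n" unfolding mn_def n_def by (metis of_nat_le_iff of_nat_mult of_nat_numeral)
        then have "mn / n \<le> 1 / 2" using nn by (simp add: field_simps)
        then have "(mn / n)\<^sup>2 \<le> (1 / 2)\<^sup>2" using mn0 nn by (intro power_mono) auto
        then have "4 * (mn / n)\<^sup>2 \<le> 1" by (simp add: power2_eq_square mult.commute)
        then show ?thesis unfolding t_def mn_def[symmetric] using nn by (simp add: divide_right_mono)
      qed
      then have "Dm b1 (a1 + b1) b2 (a2 + b2) \<ge> t \<or> Dm a2 (a2 + b2) a1 (a1 + b1) \<ge> t"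
        using sum by (simp add: field_simps) linarith
      then show ?thesis using a1 b2 m1 m2 unfolding m1_def m2_def by auto
    qed
  qed
qed

lemma comb:
  fixes a1 b1 a2 b2 :: nat
  assumes N1: "a1 + a2 \<ge> 1" and N2: "b1 + b2 \<ge> 1" and n4: "a1 + b1 + a2 + b2 \<ge> 4"
    and inc1: "\<not> (b1 = 0 \<and> a2 = 0)" and inc2: "\<not> (a1 = 0 \<and> b2 = 0)"
  defines "t \<equiv> 4 * (real (min (a1 + a2) (b1 + b2)) / real (a1 + b1 + a2 + b2))\<^sup>2 / real (a1 + b1 + a2 + b2)"
  shows "(a1 \<ge> 1 \<and> a1 + b1 \<ge> 2 \<and> Dm b1 (a1 + b1) b2 (a2 + b2) \<ge> t) \<or>
         (b2 \<ge> 1 \<and> a2 + b2 \<ge> 2 \<and> Dm a2 (a2 + b2) a1 (a1 + b1) \<ge> t) \<or>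
         (a2 \<ge> 1 \<and> a2 + b2 \<ge> 2 \<and> Dm b2 (a2 + b2) b1 (a1 + b1) \<ge> t) \<or>
         (b1 \<ge> 1 \<and> a1 + b1 \<ge> 2 \<and> Dm a1 (a1 + b1) a2 (a2 + b2) \<ge> t)"
proof (cases "b1 * (a2 + b2) \<ge> b2 * (a1 + b1)")
  case True
  then show ?thesis using comb_half[OF N1 N2 n4 inc1 inc2 True] unfolding t_def by blast
next
  case False
  then have o: "b2 * (a1 + b1) \<ge> b1 * (a2 + b2)" by simp
  have e1: "a2 + b2 + a1 + b1 = a1 + b1 + a2 + b2" "a2 + a1 = a1 + a2" "b2 + b1 = b1 + b2" by simp_all
  have N1': "a2 + a1 \<ge> 1" and N2': "b2 + b1 \<ge> 1" and n4': "a2 + b2 + a1 + b1 \<ge> 4"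
    using N1 N2 n4 by simp_all
  have i1: "\<not> (b2 = 0 \<and> a1 = 0)" and i2: "\<not> (a2 = 0 \<and> b1 = 0)" using inc1 inc2 by auto
  have "(a2 \<ge> 1 \<and> a2 + b2 \<ge> 2 \<and> Dm b2 (a2 + b2) b1 (a1 + b1) \<ge> t) \<or>
         (b1 \<ge> 1 \<and> a1 + b1 \<ge> 2 \<and> Dm a1 (a1 + b1) a2 (a2 + b2) \<ge> t)"
    using comb_half[OF N1' N2' n4' i1 i2 o] unfolding e1 t_def .
  then show ?thesis by blast
qed

context hmain begin

definition S :: "nat \<Rightarrow> nat set" where "S c = {i\<in>{1..n}. z i = c}"

definition thr :: real where
  "thr = 4 * (real (min (card (S 1)) (card (S 2))) / real n)\<^sup>2 / real n"

definition rho :: real where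
  "rho = 1 - (tau\<^sup>2 * thr / (3 * tau\<^sup>2 + sigma\<^sup>2))\<^sup>2"

lemma thr_pos: "thr > 0"
proof -
  have "card (S 1) > 0" "card (S 2) > 0" using S1ne S2ne by (auto simp: S_def card_gt_0_iff)
  then show ?thesis using n4 by (simp add: thr_def)
qed

lemma rho_nonneg: "rho \<ge> 0"
proof -
  have "tau\<^sup>2 * thr / (3 * tau\<^sup>2 + sigma\<^sup>2) \<le> 1"
  proof -
    have "thr \<le> 1"
    proof -
      have "real (min (card (S 1)) (card (S 2))) \<le> real n"
      proof -
        have "card (S 1) \<le> card {1..n}" by (rule card_mono) (auto simp: S_def)
        then show ?thesis by simp
      qed
      then have "real (min (card (S 1)) (card (S 2))) / real n \<le> 1" using n4 by simp
      then have "(real (min (card (S 1)) (card (S 2))) / real n)\<^sup>2 \<le> 1" by (simp add: power_le_one)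
      then have "4 * (real (min (card (S 1)) (card (S 2))) / real n)\<^sup>2 \<le> real n" using n4 by simp
      then show ?thesis unfolding thr_def using n4 by simp
    qed
    then have "tau\<^sup>2 * thr \<le> tau\<^sup>2 * 1" using taup by (intro mult_left_mono) auto
    also have "\<dots> \<le> 3 * tau\<^sup>2 + sigma\<^sup>2" by simp
    finally have "tau\<^sup>2 * thr \<le> 3 * tau\<^sup>2 + sigma\<^sup>2" .
    moreover have "3 * tau\<^sup>2 + sigma\<^sup>2 > 0" using taup sigmap by (simp add: add_pos_pos)
    ultimately show ?thesis by (simp add: pos_divide_le_eq)
  qed
  moreover have "0 \<le> tau\<^sup>2 * thr / (3 * tau\<^sup>2 + sigma\<^sup>2)" using thr_pos by simp
  ultimately have "(tau\<^sup>2 * thr / (3 * tau\<^sup>2 + sigma\<^sup>2))\<^sup>2 \<le> 1" by (simp add: power_le_one)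
  then show ?thesis by (simp add: rho_def)
qed

lemma hd_meas:
  assumes "i \<in> {1..n}" "C \<subseteq> {1..n}"
  shows "(\<lambda>\<omega>. hartigan_dist (\<lambda>l. X l \<omega>) C i) \<in> borel_measurable M"
proof -
  have m: "(\<lambda>\<omega>. (norm (Uc (cf (wt i C (1 / card C))) \<omega>))\<^sup>2) \<in> borel_measurable M"
  proof -
    have [measurable]: "Uc (cf (wt i C (1 / card C))) \<in> borel_measurable M" by (rule Uc_meas)
    show ?thesis by measurable
  qed
  show ?thesis unfolding hd_Uc[OF assms] by (intro borel_measurable_times borel_measurable_const m)
qed

lemma Ev_meas:
  assumes "i \<in> {1..n}" "C \<subseteq> {1..n}" "C' \<subseteq> {1..n}"
  shows "{\<omega>\<in>space M. P \<longrightarrow> hartigan_dist (\<lambda>l. X l \<omega>) C i \<le> hartigan_dist (\<lambda>l. X l \<omega>) C' i} \<in> sets M"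
proof -
  have [measurable]: "(\<lambda>\<omega>. hartigan_dist (\<lambda>l. X l \<omega>) C i) \<in> borel_measurable M"
      "(\<lambda>\<omega>. hartigan_dist (\<lambda>l. X l \<omega>) C' i) \<in> borel_measurable M"
    using hd_meas assms by auto
  show ?thesis
  proof (cases P)
    case True
    then show ?thesis using borel_measurable_le[OF hd_meas[OF assms(1,2)] hd_meas[OF assms(1,3)]] by simp
  next
    case False
    then show ?thesis by simp
  qed
qed

definition good :: "nat set \<Rightarrow> bool" where
  "good C1 \<longleftrightarrow> C1 \<noteq> {} \<and> {1..n} - C1 \<noteq> {} \<and> {C1, {1..n} - C1} \<noteq> {S 1, S 2}"

definition FP :: "nat set \<Rightarrow> 'a set" where
  "FP C1 = {\<omega>\<in>space M. good C1 \<and> hartigan_fixed_point (\<lambda>l. X l \<omega>) C1 ({1..n} - C1)}"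

lemma FP_meas:
  assumes C1: "C1 \<subseteq> {1..n}"
  shows "FP C1 \<in> sets M"
proof (cases "good C1")
  case True
  have ne: "C1 \<noteq> {}" "{1..n} - C1 \<noteq> {}" using True unfolding good_def by blast+
  let ?C2 = "{1..n} - C1"
  have fin: "finite C1" "finite ?C2" using C1 finite_subset by auto
  have "FP C1 = (\<Inter>i\<in>C1. {\<omega>\<in>space M. card C1 > 1 \<longrightarrow> hartigan_dist (\<lambda>l. X l \<omega>) C1 i \<le> hartigan_dist (\<lambda>l. X l \<omega>) ?C2 i})
      \<inter> (\<Inter>i\<in>?C2. {\<omega>\<in>space M. card ?C2 > 1 \<longrightarrow> hartigan_dist (\<lambda>l. X l \<omega>) ?C2 i \<le> hartigan_dist (\<lambda>l. X l \<omega>) C1 i})"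
    using True ne by (auto simp: FP_def hartigan_fixed_point_def)
  also have "\<dots> \<in> sets M"
  proof (rule sets.Int)
    show "(\<Inter>i\<in>C1. {\<omega>\<in>space M. card C1 > 1 \<longrightarrow> hartigan_dist (\<lambda>l. X l \<omega>) C1 i \<le> hartigan_dist (\<lambda>l. X l \<omega>) ?C2 i}) \<in> sets M"
    proof (rule sets.finite_INT[OF fin(1)])
      show "C1 \<noteq> {}" using ne by blast
      fix i assume "i \<in> C1"
      then have "i \<in> {1..n}" using C1 by blast
      then show "{\<omega>\<in>space M. card C1 > 1 \<longrightarrow> hartigan_dist (\<lambda>l. X l \<omega>) C1 i \<le> hartigan_dist (\<lambda>l. X l \<omega>) ?C2 i} \<in> sets M"
        by (rule Ev_meas) (use C1 in auto)
    qed
    show "(\<Inter>i\<in>?C2. {\<omega>\<in>space M. card ?C2 > 1 \<longrightarrow> hartigan_dist (\<lambda>l. X l \<omega>) ?C2 i \<le> hartigan_dist (\<lambda>l. X l \<omega>) C1 i}) \<in> sets M"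
    proof (rule sets.finite_INT[OF fin(2)])
      show "?C2 \<noteq> {}" using ne by blast
      fix i assume "i \<in> ?C2"
      then have "i \<in> {1..n}" by blast
      then show "{\<omega>\<in>space M. card ?C2 > 1 \<longrightarrow> hartigan_dist (\<lambda>l. X l \<omega>) ?C2 i \<le> hartigan_dist (\<lambda>l. X l \<omega>) C1 i} \<in> sets M"
        by (rule Ev_meas) (use C1 in auto)
    qed
  qed
  finally show ?thesis .
next
  case False
  then have "FP C1 = {}" by (auto simp: FP_def)
  then show ?thesis by simp
qed

end

context hmain begin

lemma rho_eq: "rho powr (real CARD('d) / 4) \<ge> 0" by simp

lemma move_case:
  assumes C: "C \<subseteq> {1..n}" and C'ne: "{1..n} - C \<noteq> {}" and c: "c \<in> {1, 2}"
    and cnt: "card {l\<in>C. z l = c} \<ge> 1" and mC: "card C \<ge> 2"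
    and D: "Dm (card {l\<in>C. z l = 3 - c}) (card C) (card {l\<in>({1..n} - C). z l = 3 - c}) (card ({1..n} - C)) \<ge> thr"
  shows "\<exists>i\<in>C. prob {\<omega>\<in>space M. hartigan_dist (\<lambda>l. X l \<omega>) C i \<le> hartigan_dist (\<lambda>l. X l \<omega>) ({1..n} - C) i}
            \<le> rho powr (real CARD('d) / 4)"
proof -
  have "{l\<in>C. z l = c} \<noteq> {}" using cnt by (metis card.empty not_one_le_zero)
  then obtain i where i: "i \<in> C" "z i = c" by blast
  have o1: "{l\<in>C. z l \<noteq> z i} = {l\<in>C. z l = 3 - c}" using other_cls[OF C c] i by simp
  have o2: "{l\<in>({1..n} - C). z l \<noteq> z i} = {l\<in>({1..n} - C). z l = 3 - c}"
    using other_cls[of "{1..n} - C" c] c i by auto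
  have "prob {\<omega>\<in>space M. hartigan_dist (\<lambda>l. X l \<omega>) C i \<le> hartigan_dist (\<lambda>l. X l \<omega>) ({1..n} - C) i}
            \<le> (1 - (tau\<^sup>2 * thr / (3 * tau\<^sup>2 + sigma\<^sup>2))\<^sup>2) powr (real CARD('d) / 4)"
  proof (rule move_prob[OF C i(1) mC C'ne thr_pos])
    show "(real (card {l\<in>C. z l \<noteq> z i}))\<^sup>2 / (real (card C) * (real (card C) - 1))
          - (real (card {l\<in>({1..n} - C). z l \<noteq> z i}))\<^sup>2 / (real (card ({1..n} - C)) * (real (card ({1..n} - C)) + 1)) \<ge> thr"
      using D unfolding o1 o2 Dm_def .
  qed
  then show ?thesis using i unfolding rho_def by blast
qed

lemma FP_bound:
  assumes C1: "C1 \<subseteq> {1..n}"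
  shows "prob (FP C1) \<le> rho powr (real CARD('d) / 4)"
proof (cases "good C1")
  case False
  then have "FP C1 = {}" by (simp add: FP_def)
  then show ?thesis by simp
next
  case True
  define C2 where "C2 = {1..n} - C1"
  have ne: "C1 \<noteq> {}" "C2 \<noteq> {}" and inc: "{C1, C2} \<noteq> {S 1, S 2}" using True unfolding good_def C2_def by blast+
  have C2: "C2 \<subseteq> {1..n}" by (auto simp: C2_def)
  have C12: "{1..n} - C2 = C1" using C1 by (auto simp: C2_def)
  have fC1: "finite C1" and fC2: "finite C2" using C1 C2 finite_subset by auto
  define a1 where "a1 = card {l\<in>C1. z l = 1}"
  define b1 where "b1 = card {l\<in>C1. z l = 2}"
  define a2 where "a2 = card {l\<in>C2. z l = 1}"
  define b2 where "b2 = card {l\<in>C2. z l = 2}"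
  have cS: "a1 + a2 = card (S 1)" "b1 + b2 = card (S 2)" for c
  proof -
    have "S c = {l\<in>C1. z l = c} \<union> {l\<in>C2. z l = c}" for c using C1 by (auto simp: S_def C2_def)
    moreover have "card ({l\<in>C1. z l = c} \<union> {l\<in>C2. z l = c}) = card {l\<in>C1. z l = c} + card {l\<in>C2. z l = c}" for c
      using fC1 fC2 by (intro card_Un_disjoint) (auto simp: C2_def)
    ultimately show "a1 + a2 = card (S 1)" "b1 + b2 = card (S 2)" by (simp_all add: a1_def a2_def b1_def b2_def)
  qed
  have m1: "a1 + b1 = card C1" using card_cls[OF C1] by (simp add: a1_def b1_def)
  have m2: "a2 + b2 = card C2" using card_cls[OF C2] by (simp add: a2_def b2_def)
  have nsum: "a1 + b1 + a2 + b2 = n"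
  proof -
    have "card C1 + card C2 = card (C1 \<union> C2)" using fC1 fC2 by (intro card_Un_disjoint[symmetric]) (auto simp: C2_def)
    also have "C1 \<union> C2 = {1..n}" using C1 by (auto simp: C2_def)
    finally show ?thesis using m1 m2 by simp
  qed
  have N1: "a1 + a2 \<ge> 1" and N2: "b1 + b2 \<ge> 1"
    using S1ne S2ne cS by (auto simp: S_def card_gt_0_iff Suc_le_eq)
  have n4': "a1 + b1 + a2 + b2 \<ge> 4" using nsum n4 by simp
  have inc1: "\<not> (b1 = 0 \<and> a2 = 0)"
  proof
    assume h: "b1 = 0 \<and> a2 = 0"
    then have e1: "{l\<in>C1. z l = 2} = {}" and e2: "{l\<in>C2. z l = 1} = {}"
      using fC1 fC2 by (auto simp: b1_def a2_def)
    have "C1 = S 1"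
    proof
      show "C1 \<subseteq> S 1" using C1 e1 zr by (fastforce simp: S_def)
      show "S 1 \<subseteq> C1" using e2 by (auto simp: S_def C2_def)
    qed
    moreover have "C2 = S 2"
    proof
      show "C2 \<subseteq> S 2" using C2 e2 zr by (fastforce simp: S_def)
      show "S 2 \<subseteq> C2" using e1 by (auto simp: S_def C2_def)
    qed
    ultimately show False using inc by simp
  qed
  have inc2: "\<not> (a1 = 0 \<and> b2 = 0)"
  proof
    assume h: "a1 = 0 \<and> b2 = 0"
    then have e1: "{l\<in>C1. z l = 1} = {}" and e2: "{l\<in>C2. z l = 2} = {}"
      using fC1 fC2 by (auto simp: a1_def b2_def)
    have "C1 = S 2"
    proof
      show "C1 \<subseteq> S 2" using C1 e1 zr by (fastforce simp: S_def)
      show "S 2 \<subseteq> C1" using e2 by (auto simp: S_def C2_def)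
    qed
    moreover have "C2 = S 1"
    proof
      show "C2 \<subseteq> S 1" using C2 e2 zr by (fastforce simp: S_def)
      show "S 1 \<subseteq> C2" using e1 by (auto simp: S_def C2_def)
    qed
    ultimately show False using inc by (simp add: insert_commute)
  qed
  have thr': "thr = 4 * (real (min (a1 + a2) (b1 + b2)) / real (a1 + b1 + a2 + b2))\<^sup>2 / real (a1 + b1 + a2 + b2)"
    unfolding thr_def cS nsum ..
  have FP1: "FP C1 \<subseteq> {\<omega>\<in>space M. hartigan_dist (\<lambda>l. X l \<omega>) C1 i \<le> hartigan_dist (\<lambda>l. X l \<omega>) C2 i}"
    if "i \<in> C1" "card C1 \<ge> 2" for i
    using that by (auto simp: FP_def hartigan_fixed_point_def C2_def)
  have FP2: "FP C1 \<subseteq> {\<omega>\<in>space M. hartigan_dist (\<lambda>l. X l \<omega>) C2 i \<le> hartigan_dist (\<lambda>l. X l \<omega>) C1 i}"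
    if "i \<in> C2" "card C2 \<ge> 2" for i
    using that by (auto simp: FP_def hartigan_fixed_point_def C2_def)
  have FPm: "FP C1 \<in> sets M" by (rule FP_meas[OF C1])
  have mono: "prob (FP C1) \<le> rho powr (real CARD('d) / 4)"
    if "FP C1 \<subseteq> Ev" "Ev \<in> sets M" "prob Ev \<le> rho powr (real CARD('d) / 4)" for Ev
    using finite_measure_mono[OF that(1,2)] that(3) by simp
  have fromC1: ?thesis if c: "c \<in> {1, 2}" and cnt: "card {l\<in>C1. z l = c} \<ge> 1" and mC: "card C1 \<ge> 2"
    and D: "Dm (card {l\<in>C1. z l = 3 - c}) (card C1) (card {l\<in>C2. z l = 3 - c}) (card C2) \<ge> thr" for c
  proof -
    obtain i where i: "i \<in> C1" and p: "prob {\<omega>\<in>space M. hartigan_dist (\<lambda>l. X l \<omega>) C1 i \<le> hartigan_dist (\<lambda>l. X l \<omega>) ({1..n} - C1) i}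
            \<le> rho powr (real CARD('d) / 4)"
      using move_case[OF C1 ne(2)[unfolded C2_def] c cnt mC] D unfolding C2_def by blast
    show ?thesis
      by (rule mono[OF FP1[OF i mC]]) (use p i C1 Ev_meas[of i C1 "{1..n} - C1" True] in \<open>auto simp: C2_def\<close>)
  qed
  have fromC2: ?thesis if c: "c \<in> {1, 2}" and cnt: "card {l\<in>C2. z l = c} \<ge> 1" and mC: "card C2 \<ge> 2"
    and D: "Dm (card {l\<in>C2. z l = 3 - c}) (card C2) (card {l\<in>C1. z l = 3 - c}) (card C1) \<ge> thr" for c
  proof -
    have "\<exists>i\<in>C2. prob {\<omega>\<in>space M. hartigan_dist (\<lambda>l. X l \<omega>) C2 i \<le> hartigan_dist (\<lambda>l. X l \<omega>) ({1..n} - C2) i}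
            \<le> rho powr (real CARD('d) / 4)"
    proof (rule move_case[OF C2 _ c cnt mC])
      show "{1..n} - C2 \<noteq> {}" unfolding C12 by (rule ne(1))
      show "Dm (card {l\<in>C2. z l = 3 - c}) (card C2) (card {l\<in>({1..n} - C2). z l = 3 - c}) (card ({1..n} - C2)) \<ge> thr"
        unfolding C12 by (rule D)
    qed
    then obtain i where i: "i \<in> C2" and p: "prob {\<omega>\<in>space M. hartigan_dist (\<lambda>l. X l \<omega>) C2 i \<le> hartigan_dist (\<lambda>l. X l \<omega>) C1 i}
            \<le> rho powr (real CARD('d) / 4)"
      unfolding C12 by blast
    show ?thesis
      by (rule mono[OF FP2[OF i mC]]) (use p i C2 Ev_meas[of i C2 C1 True] C1 in auto)
  qed
  have e: "(3::nat) - 1 = 2" "(3::nat) - 2 = 1" by simp_all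
  from comb[OF N1 N2 n4' inc1 inc2, folded thr']
  show ?thesis
  proof (elim disjE conjE)
    assume h: "1 \<le> a1" "2 \<le> a1 + b1" "thr \<le> Dm (real b1) (real (a1 + b1)) (real b2) (real (a2 + b2))"
    show ?thesis
    proof (rule fromC1[of 1])
      show "card {l\<in>C1. z l = 1} \<ge> 1" using h(1) unfolding a1_def .
      show "card C1 \<ge> 2" using h(2) unfolding m1 .
      show "Dm (card {l\<in>C1. z l = 3 - 1}) (card C1) (card {l\<in>C2. z l = 3 - 1}) (card C2) \<ge> thr"
        unfolding e using h(3)[unfolded m1 m2, unfolded b1_def b2_def] .
    qed simp
  next
    assume h: "1 \<le> b2" "2 \<le> a2 + b2" "thr \<le> Dm (real a2) (real (a2 + b2)) (real a1) (real (a1 + b1))"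
    show ?thesis
    proof (rule fromC2[of 2])
      show "card {l\<in>C2. z l = 2} \<ge> 1" using h(1) unfolding b2_def .
      show "card C2 \<ge> 2" using h(2) unfolding m2 .
      show "Dm (card {l\<in>C2. z l = 3 - 2}) (card C2) (card {l\<in>C1. z l = 3 - 2}) (card C1) \<ge> thr"
        unfolding e using h(3)[unfolded m1 m2, unfolded a1_def a2_def] .
    qed simp
  next
    assume h: "1 \<le> a2" "2 \<le> a2 + b2" "thr \<le> Dm (real b2) (real (a2 + b2)) (real b1) (real (a1 + b1))"
    show ?thesis
    proof (rule fromC2[of 1])
      show "card {l\<in>C2. z l = 1} \<ge> 1" using h(1) unfolding a2_def .
      show "card C2 \<ge> 2" using h(2) unfolding m2 .
      show "Dm (card {l\<in>C2. z l = 3 - 1}) (card C2) (card {l\<in>C1. z l = 3 - 1}) (card C1) \<ge> thr"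
        unfolding e using h(3)[unfolded m1 m2, unfolded b1_def b2_def] .
    qed simp
  next
    assume h: "1 \<le> b1" "2 \<le> a1 + b1" "thr \<le> Dm (real a1) (real (a1 + b1)) (real a2) (real (a2 + b2))"
    show ?thesis
    proof (rule fromC1[of 2])
      show "card {l\<in>C1. z l = 2} \<ge> 1" using h(1) unfolding b1_def .
      show "card C1 \<ge> 2" using h(2) unfolding m1 .
      show "Dm (card {l\<in>C1. z l = 3 - 2}) (card C1) (card {l\<in>C2. z l = 3 - 2}) (card C2) \<ge> thr"
        unfolding e using h(3)[unfolded m1 m2, unfolded a1_def a2_def] .
    qed simp
  qed
qed

end

theorem corollary3p12:
  fixes M :: "'a measure"
    and mu :: "nat \<Rightarrow> 'a \<Rightarrow> real ^ 'd"
    and xi :: "nat \<Rightarrow> 'a \<Rightarrow> real ^ 'd"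
    and z :: "nat \<Rightarrow> nat"
    and n :: nat and tau sigma :: real
  assumes "prob_space M"
    and "n \<ge> 4" and "tau > 0" and "sigma > 0"
    and "\<And>l. l \<in> {1, 2} \<Longrightarrow> distributed M lborel (mu l) (iso_gauss_density tau)"
    and "\<And>i. i \<in> {1..n} \<Longrightarrow> distributed M lborel (xi i) (iso_gauss_density sigma)"
    and "prob_space.indep_vars M (\<lambda>_. borel) (case_sum mu xi) (Inl ` {1, 2} \<union> Inr ` {1..n})"
    and "\<And>i. i \<in> {1..n} \<Longrightarrow> z i \<in> {1, 2}"
    and "{i\<in>{1..n}. z i = 1} \<noteq> {}" and "{i\<in>{1..n}. z i = 2} \<noteq> {}"
  shows
    "let S1 = {i\<in>{1..n}. z i = 1}; S2 = {i\<in>{1..n}. z i = 2};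
         Rstar = real (min (card S1) (card S2)) / real n;
         rho = 1 - (4 * tau\<^sup>2 * Rstar\<^sup>2 / real n / (3 * tau\<^sup>2 + sigma\<^sup>2))\<^sup>2;
         E = {\<omega> \<in> space M. \<exists>C1 C2. C1 \<noteq> {} \<and> C2 \<noteq> {} \<and> C1 \<inter> C2 = {} \<and> C1 \<union> C2 = {1..n}
                \<and> {C1, C2} \<noteq> {S1, S2}
                \<and> hartigan_fixed_point (\<lambda>i. mu (z i) \<omega> + xi i \<omega>) C1 C2}
     in E \<in> sets M \<and> measure M E \<le> 2 ^ n * rho powr (real CARD('d) / 4)"
proof -
  interpret hmain M mu xi z n tau sigma
  proof (rule hmain.intro)
    show "prob_space M" by (rule assms(1))
    show "hmain_axioms M mu xi z n tau sigma"
      by (unfold_locales) (use assms in auto)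
  qed
  have S1: "{i\<in>{1..n}. z i = 1} = S 1" and S2: "{i\<in>{1..n}. z i = 2} = S 2" by (simp_all add: S_def)
  have Xe: "(\<lambda>i. mu (z i) \<omega> + xi i \<omega>) = (\<lambda>l. X l \<omega>)" for \<omega> by (simp add: X_def)
  define E where "E = {\<omega> \<in> space M. \<exists>C1 C2. C1 \<noteq> {} \<and> C2 \<noteq> {} \<and> C1 \<inter> C2 = {} \<and> C1 \<union> C2 = {1..n}
                \<and> {C1, C2} \<noteq> {S 1, S 2}
                \<and> hartigan_fixed_point (\<lambda>l. X l \<omega>) C1 C2}"
  have EU: "E = (\<Union>C1\<in>Pow {1..n}. FP C1)"
  proof (intro equalityI subsetI)
    fix \<omega> assume "\<omega> \<in> E"
    then have w: "\<omega> \<in> space M" and "\<exists>C1 C2. C1 \<noteq> {} \<and> C2 \<noteq> {} \<and> C1 \<inter> C2 = {} \<and> C1 \<union> C2 = {1..n}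
                \<and> {C1, C2} \<noteq> {S 1, S 2} \<and> hartigan_fixed_point (\<lambda>l. X l \<omega>) C1 C2"
      by (simp_all only: E_def mem_Collect_eq)
    then obtain C1 C2 where hc: "C1 \<noteq> {} \<and> C2 \<noteq> {} \<and> C1 \<inter> C2 = {} \<and> C1 \<union> C2 = {1..n}
                \<and> {C1, C2} \<noteq> {S 1, S 2} \<and> hartigan_fixed_point (\<lambda>l. X l \<omega>) C1 C2"
      by (elim exE)
    note h = hc[THEN conjunct1] hc[THEN conjunct2, THEN conjunct1]
      hc[THEN conjunct2, THEN conjunct2, THEN conjunct1]
      hc[THEN conjunct2, THEN conjunct2, THEN conjunct2, THEN conjunct1]
      hc[THEN conjunct2, THEN conjunct2, THEN conjunct2, THEN conjunct2, THEN conjunct1]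
      hc[THEN conjunct2, THEN conjunct2, THEN conjunct2, THEN conjunct2, THEN conjunct2]
    have C2: "C2 = {1..n} - C1" using h(3,4) by blast
    have "good C1" unfolding good_def
    proof (intro conjI)
      show "C1 \<noteq> {}" by (rule h(1))
      show "{1..n} - C1 \<noteq> {}" using h(2) unfolding C2 .
      show "{C1, {1..n} - C1} \<noteq> {S 1, S 2}" using h(5) unfolding C2 .
    qed
    moreover have "hartigan_fixed_point (\<lambda>l. X l \<omega>) C1 ({1..n} - C1)" using h(6) unfolding C2 .
    ultimately have "\<omega> \<in> FP C1" unfolding FP_def using w by (simp only: mem_Collect_eq simp_thms)
    moreover have "C1 \<in> Pow {1..n}" using h(4) by blast
    ultimately show "\<omega> \<in> (\<Union>C1\<in>Pow {1..n}. FP C1)" by blast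
  next
    fix \<omega> assume "\<omega> \<in> (\<Union>C1\<in>Pow {1..n}. FP C1)"
    then obtain C1 where C1: "C1 \<subseteq> {1..n}" and f: "\<omega> \<in> FP C1" by blast
    have fc: "\<omega> \<in> space M \<and> good C1 \<and> hartigan_fixed_point (\<lambda>l. X l \<omega>) C1 ({1..n} - C1)"
      using f by (simp only: FP_def mem_Collect_eq)
    note w = fc[THEN conjunct1] and g = fc[THEN conjunct2, THEN conjunct1] and hf = fc[THEN conjunct2, THEN conjunct2]
    have gc: "C1 \<noteq> {} \<and> {1..n} - C1 \<noteq> {} \<and> {C1, {1..n} - C1} \<noteq> {S 1, S 2}" using g unfolding good_def .
    note g' = gc[THEN conjunct1] gc[THEN conjunct2, THEN conjunct1] gc[THEN conjunct2, THEN conjunct2]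
    have d: "C1 \<inter> ({1..n} - C1) = {}" "C1 \<union> ({1..n} - C1) = {1..n}" using C1 by blast+
    have "\<exists>C1' C2. C1' \<noteq> {} \<and> C2 \<noteq> {} \<and> C1' \<inter> C2 = {} \<and> C1' \<union> C2 = {1..n}
                \<and> {C1', C2} \<noteq> {S 1, S 2} \<and> hartigan_fixed_point (\<lambda>l. X l \<omega>) C1' C2"
      by (rule exI[of _ C1], rule exI[of _ "{1..n} - C1"]) (intro conjI g' d hf)
    then show "\<omega> \<in> E" unfolding E_def using w by (simp only: mem_Collect_eq simp_thms)
  qed
  have Em: "E \<in> sets M"
    unfolding EU
  proof (rule sets.finite_UN)
    fix C1 assume "C1 \<in> Pow {1..n}"
    then show "FP C1 \<in> sets M" by (intro FP_meas) blast
  qed simp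
  have "measure M E \<le> (\<Sum>C1\<in>Pow {1..n}. prob (FP C1))"
    unfolding EU
  proof (rule measure_UNION_le)
    fix C1 assume "C1 \<in> Pow {1..n}"
    then show "FP C1 \<in> sets M" by (intro FP_meas) blast
  qed simp
  also have "\<dots> \<le> real (card (Pow {1..n})) * rho powr (real CARD('d) / 4)"
  proof (rule sum_bounded_above)
    fix C1 assume "C1 \<in> Pow {1..n}"
    then show "prob (FP C1) \<le> rho powr (real CARD('d) / 4)" by (intro FP_bound) blast
  qed
  also have "real (card (Pow {1..n})) = 2 ^ n" by (simp add: card_Pow)
  finally have Mb: "measure M E \<le> 2 ^ n * rho powr (real CARD('d) / 4)" .
  have rho': "1 - (4 * tau\<^sup>2 * (real (min (card (S 1)) (card (S 2))) / real n)\<^sup>2 / real n / (3 * tau\<^sup>2 + sigma\<^sup>2))\<^sup>2 = rho"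
    unfolding rho_def thr_def by (simp add: mult.assoc)
  show ?thesis unfolding Let_def S1 S2 Xe rho' E_def[symmetric] by (intro conjI Em Mb)
qed

end
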